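(* Let $X$ be a locally convex space, let $T:X\rightrightarrows X^{*}$, and let $V\subset X$ be open and convex with $D(T)\cap V\neq\emptyset$ and $T|_{V}\in\mathcal{M}(X)$. If $T$ is $V$-NI, then $\varphi_{T|_{V}}\ge c$ on $\overline{V}\times X^{*}$; in particular, $T$ is $S$-NI for every $S$ with $V\subset S\subset\overline{V}$. If, in addition, $T$ is $\overline{V}$-representable, then \[[\varphi_{T|_{V}}\le c]\cap(\overline{V}\times X^{*})\subset T+N_{\overline{V}}\subset D(T)\times X^{*},\] and in particular, for every $S$ with $V\subset S\subset\overline{V}$, $S$ locates $T$ and $S$ identifies $T+N_{\overline{V}}$.
   Context: $(X,\tau)$ is a non-trivial Hausdorff locally convex space, $X^*$ its dual with weak-star topology $\omega^*$, $Z=X\times X^*$ with topology $\tau\times\omega^*$, $c(x,x^* )=\langle x,x^*\rangle$. Operators are identified with their graphs; $D(T)$ is the domain; $T|_V$ has graph $\operatorname{Graph}T\cap(V\times X^* )$; $\overline V$ is the closure. $N_C(x)=\{x^*\mid\langle y-x,x^*\rangle\le0\ \forall y\in C\}$ for $x\in C$, $\emptyset$ otherwise; $(T+N_C)(x)=Tx+N_C(x)$. $\varphi_{T}(x,x^{*})=\sup\{\langle x,u^{*}\rangle+\langle u,x^{*}\rangle-\langle u,u^{*}\rangle\mid(u,u^{*})\in T\}$ ($\sup\emptyset=-\infty$); $[f\le g]=\{z\mid f(z)\le g(z)\}$. $\mathcal M(X)$: monotone operators with non-empty graph. $T$ is $W$-representable if $W\cap D(T)\ne\emptyset$ and there is a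 proper convex $\tau\times\omega^*$-lsc $h\ge c$ with $\{z\in W\times X^*\mid h(z)=c(z)\}=\operatorname{Graph}(T|_W)$. $S$ locates $T$ if $\operatorname{Pr}_X([\varphi_{T|_S}\le c])\cap S\subset D(T)$; $S$ identifies $R$ if $[\varphi_{R|_S}\le c]\cap(S\times X^* )\subset\operatorname{Graph}R$; $T$ is $S$-NI if $\varphi_{T|_S}\ge c$ on $S\times X^*$. *)

theory Defs
  imports "HOL-Analysis.Analysis"
begin

definition lcs :: "'a::real_vector topology \<Rightarrow> bool" where
  "lcs \<tau> \<longleftrightarrow> topspace \<tau> = UNIV \<and> Hausdorff_space \<tau>
     \<and> continuous_map (prod_topology \<tau> \<tau>) \<tau> (\<lambda>(x, y). x + y)
     \<and> continuous_map (prod_topology euclideanreal \<tau>) \<tau> (\<lambda>(a, x). a *\<^sub>R x)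
     \<and> (\<forall>U x. openin \<tau> U \<and> x \<in> U \<longrightarrow> (\<exists>W. openin \<tau> W \<and> convex W \<and> x \<in> W \<and> W \<subseteq> U))
     \<and> (\<exists>x::'a. x \<noteq> 0)"

definition dual :: "'a::real_vector topology \<Rightarrow> ('a \<Rightarrow> real) set" where
  "dual \<tau> = {f. linear f \<and> continuous_map \<tau> euclideanreal f}"

definition wstar :: "'a::real_vector topology \<Rightarrow> ('a \<Rightarrow> real) topology" where
  "wstar \<tau> = subtopology (powertop_real UNIV) (dual \<tau>)"

definition Ztop :: "'a::real_vector topology \<Rightarrow> ('a \<times> ('a \<Rightarrow> real)) topology" where
  "Ztop \<tau> = prod_topology \<tau> (wstar \<tau>)"

definition cpl :: "'a \<times> ('a \<Rightarrow> real) \<Rightarrow> real" where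
  "cpl z = snd z (fst z)"

text \<open>Operators are identified with graphs; T is an operator X \<rightrightarrows> X*.\<close>
definition operator :: "'a::real_vector topology \<Rightarrow> ('a \<times> ('a \<Rightarrow> real)) set \<Rightarrow> bool" where
  "operator \<tau> T \<longleftrightarrow> T \<subseteq> UNIV \<times> dual \<tau>"

definition dom_op :: "('a \<times> 'b) set \<Rightarrow> 'a set" where
  "dom_op T = fst ` T"

definition restr :: "('a \<times> 'b) set \<Rightarrow> 'a set \<Rightarrow> ('a \<times> 'b) set" where
  "restr T V = T \<inter> (V \<times> UNIV)"

definition monotone_op :: "('a::real_vector \<times> ('a \<Rightarrow> real)) set \<Rightarrow> bool" where
  "monotone_op T \<longleftrightarrow> (\<forall>(x, u) \<in> T. \<forall>(y, v) \<in> T. 0 \<le> u (x - y) - v (x - y))"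

definition MX :: "'a::real_vector topology \<Rightarrow> ('a \<times> ('a \<Rightarrow> real)) set set" where
  "MX \<tau> = {T. operator \<tau> T \<and> monotone_op T \<and> T \<noteq> {}}"

text \<open>Fitzpatrick function (sup of empty set is -\<infinity>).\<close>
definition fitz :: "('a::real_vector \<times> ('a \<Rightarrow> real)) set \<Rightarrow> 'a \<times> ('a \<Rightarrow> real) \<Rightarrow> ereal" where
  "fitz T z = (SUP p \<in> T. ereal (snd p (fst z) + snd z (fst p) - snd p (fst p)))"

definition le_c :: "'a::real_vector topology \<Rightarrow> ('a \<times> ('a \<Rightarrow> real) \<Rightarrow> ereal) \<Rightarrow> ('a \<times> ('a \<Rightarrow> real)) set" where
  "le_c \<tau> f = {z \<in> UNIV \<times> dual \<tau>. f z \<le> ereal (cpl z)}"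

definition normal_cone :: "'a::real_vector topology \<Rightarrow> 'a set \<Rightarrow> ('a \<times> ('a \<Rightarrow> real)) set" where
  "normal_cone \<tau> C = {(x, u). x \<in> C \<and> u \<in> dual \<tau> \<and> (\<forall>y \<in> C. u (y - x) \<le> 0)}"

definition op_sum :: "('a \<times> ('a \<Rightarrow> real)) set \<Rightarrow> ('a \<times> ('a \<Rightarrow> real)) set \<Rightarrow> ('a \<times> ('a \<Rightarrow> real)) set" where
  "op_sum T N = {(x, \<lambda>y. u y + v y) | x u v. (x, u) \<in> T \<and> (x, v) \<in> N}"

definition proper_on :: "'a::real_vector topology \<Rightarrow> ('a \<times> ('a \<Rightarrow> real) \<Rightarrow> ereal) \<Rightarrow> bool" where
  "proper_on \<tau> h \<longleftrightarrow> (\<forall>z \<in> UNIV \<times> dual \<tau>. h z \<noteq> -\<infinity>) \<and> (\<exists>z \<in> UNIV \<times> dual \<tau>. h z \<noteq> \<infinity>)"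

definition convex_on_Z :: "'a::real_vector topology \<Rightarrow> ('a \<times> ('a \<Rightarrow> real) \<Rightarrow> ereal) \<Rightarrow> bool" where
  "convex_on_Z \<tau> h \<longleftrightarrow> (\<forall>x u y v (t::real). u \<in> dual \<tau> \<and> v \<in> dual \<tau> \<and> 0 \<le> t \<and> t \<le> 1 \<longrightarrow>
      h (t *\<^sub>R x + (1 - t) *\<^sub>R y, \<lambda>a. t * u a + (1 - t) * v a)
        \<le> ereal t * h (x, u) + ereal (1 - t) * h (y, v))"

definition lsc_on_Z :: "'a::real_vector topology \<Rightarrow> ('a \<times> ('a \<Rightarrow> real) \<Rightarrow> ereal) \<Rightarrow> bool" where
  "lsc_on_Z \<tau> h \<longleftrightarrow> (\<forall>t::real. closedin (Ztop \<tau>) {z \<in> topspace (Ztop \<tau>). h z \<le> ereal t})"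

definition representable :: "'a::real_vector topology \<Rightarrow> 'a set \<Rightarrow> ('a \<times> ('a \<Rightarrow> real)) set \<Rightarrow> bool" where
  "representable \<tau> W T \<longleftrightarrow> W \<inter> dom_op T \<noteq> {} \<and>
     (\<exists>h. proper_on \<tau> h \<and> convex_on_Z \<tau> h \<and> lsc_on_Z \<tau> h
        \<and> (\<forall>z \<in> UNIV \<times> dual \<tau>. ereal (cpl z) \<le> h z)
        \<and> {z \<in> W \<times> dual \<tau>. h z = ereal (cpl z)} = restr T W)"

definition locates :: "'a::real_vector topology \<Rightarrow> 'a set \<Rightarrow> ('a \<times> ('a \<Rightarrow> real)) set \<Rightarrow> bool" where
  "locates \<tau> S T \<longleftrightarrow> fst ` le_c \<tau> (fitz (restr T S)) \<inter> S \<subseteq> dom_op T"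

definition identifies :: "'a::real_vector topology \<Rightarrow> 'a set \<Rightarrow> ('a \<times> ('a \<Rightarrow> real)) set \<Rightarrow> bool" where
  "identifies \<tau> S R \<longleftrightarrow> le_c \<tau> (fitz (restr R S)) \<inter> (S \<times> dual \<tau>) \<subseteq> R"

definition NI :: "'a::real_vector topology \<Rightarrow> 'a set \<Rightarrow> ('a \<times> ('a \<Rightarrow> real)) set \<Rightarrow> bool" where
  "NI \<tau> S T \<longleftrightarrow> (\<forall>z \<in> S \<times> dual \<tau>. ereal (cpl z) \<le> fitz (restr T S) z)"

end

theory Submission
  imports Defs "HOL-Library.Function_Algebras"
begin

definition sublin :: "('b::real_vector \<Rightarrow> real) \<Rightarrow> bool" where
  "sublin p \<longleftrightarrow> (\<forall>x y. p (x + y) \<le> p x + p y) \<and> (\<forall>t x. 0 \<le> t \<longrightarrow> p (t *\<^sub>R x) = t * p x)"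

lemma sublin_add: "sublin p \<Longrightarrow> p (x + y) \<le> p x + p y" by (simp add: sublin_def)
lemma sublin_scale: "sublin p \<Longrightarrow> 0 \<le> t \<Longrightarrow> p (t *\<^sub>R x) = t * p x" by (simp add: sublin_def)
lemma sublin_zero: "sublin p \<Longrightarrow> p 0 = 0"
  using sublin_scale[of p 0 0] by simp
lemma sublin_neg: "sublin p \<Longrightarrow> - p (- x) \<le> p x"
  using sublin_add[of p x "-x"] sublin_zero[of p] by simp

definition shiftf :: "('b::real_vector \<Rightarrow> real) \<Rightarrow> 'b \<Rightarrow> 'b \<Rightarrow> real" where
  "shiftf p y x = Inf ((\<lambda>s. p (x + s *\<^sub>R y) - s * p y) ` {0..})"

lemma shiftf_bdd:
  assumes "sublin p"
  shows "bdd_below ((\<lambda>s. p (x + s *\<^sub>R y) - s * p y) ` {0..})"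
proof (rule bdd_belowI2[where m="- p (-x)"])
  fix s :: real assume "s \<in> {0..}"
  hence "p (s *\<^sub>R y) = s * p y" using assms sublin_scale by auto
  moreover have "p (s *\<^sub>R y) \<le> p (x + s *\<^sub>R y) + p (-x)"
    using sublin_add[OF assms, of "x + s *\<^sub>R y" "-x"] by simp
  ultimately show "- p (- x) \<le> p (x + s *\<^sub>R y) - s * p y" by simp
qed

lemma shiftf_le:
  assumes "sublin p" "0 \<le> s"
  shows "shiftf p y x \<le> p (x + s *\<^sub>R y) - s * p y"
  unfolding shiftf_def using assms shiftf_bdd[OF assms(1)] by (intro cInf_lower) auto

lemma shiftf_ge:
  assumes "\<And>s. 0 \<le> s \<Longrightarrow> c \<le> p (x + s *\<^sub>R y) - s * p y"
  shows "c \<le> shiftf p y x"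
  unfolding shiftf_def using assms by (intro cInf_greatest) auto

lemma shiftf_props:
  assumes p: "sublin p"
  shows "sublin (shiftf p y)" "\<And>x. shiftf p y x \<le> p x" "shiftf p y (-y) \<le> - p y"
proof -
  show "\<And>x. shiftf p y x \<le> p x" using shiftf_le[OF p, of 0] by simp
  show "shiftf p y (-y) \<le> - p y" using shiftf_le[OF p, of 1 y "-y"] sublin_zero[OF p] by simp
  have add: "shiftf p y (x + x') \<le> shiftf p y x + shiftf p y x'" for x x'
  proof -
    have "shiftf p y (x + x') - (p (x' + s2 *\<^sub>R y) - s2 * p y) \<le> shiftf p y x" if s2: "0 \<le> s2" for s2
    proof (rule shiftf_ge)
      fix s1 :: real assume s1: "0 \<le> s1"
      have "shiftf p y (x + x') \<le> p (x + x' + (s1 + s2) *\<^sub>R y) - (s1 + s2) * p y"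
        using shiftf_le[OF p] s1 s2 by simp
      also have "p (x + x' + (s1 + s2) *\<^sub>R y) \<le> p (x + s1 *\<^sub>R y) + p (x' + s2 *\<^sub>R y)"
        using sublin_add[OF p, of "x + s1 *\<^sub>R y" "x' + s2 *\<^sub>R y"]
        by (simp add: algebra_simps)
      finally show "shiftf p y (x + x') - (p (x' + s2 *\<^sub>R y) - s2 * p y) \<le> p (x + s1 *\<^sub>R y) - s1 * p y"
        by (simp add: algebra_simps)
    qed
    hence "shiftf p y (x + x') - shiftf p y x \<le> shiftf p y x'"
      by (intro shiftf_ge) (auto simp: algebra_simps)
    thus ?thesis by simp
  qed
  have hom: "shiftf p y (t *\<^sub>R x) = t * shiftf p y x" if t: "0 \<le> t" for t x
  proof (cases "t = 0")
    case True
    have "shiftf p y 0 = 0"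
    proof (rule antisym)
      show "shiftf p y 0 \<le> 0" using shiftf_le[OF p, of 0 y 0] sublin_zero[OF p] by simp
      show "0 \<le> shiftf p y 0" by (rule shiftf_ge) (simp add: sublin_scale[OF p])
    qed
    thus ?thesis using True by simp
  next
    case False
    hence tp: "0 < t" using t by simp
    show ?thesis
    proof (rule antisym)
      have "shiftf p y (t *\<^sub>R x) / t \<le> shiftf p y x"
      proof (rule shiftf_ge)
        fix s :: real assume s: "0 \<le> s"
        have "shiftf p y (t *\<^sub>R x) \<le> p (t *\<^sub>R x + (t * s) *\<^sub>R y) - (t * s) * p y"
          using shiftf_le[OF p] s tp by simp
        also have "p (t *\<^sub>R x + (t * s) *\<^sub>R y) = t * p (x + s *\<^sub>R y)"
          using sublin_scale[OF p, of t "x + s *\<^sub>R y"] tp by (simp add: algebra_simps)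
        finally show "shiftf p y (t *\<^sub>R x) / t \<le> p (x + s *\<^sub>R y) - s * p y"
          using tp by (simp add: field_simps)
      qed
      thus "shiftf p y (t *\<^sub>R x) \<le> t * shiftf p y x" using tp by (simp add: field_simps)
      show "t * shiftf p y x \<le> shiftf p y (t *\<^sub>R x)"
      proof (rule shiftf_ge)
        fix s :: real assume s: "0 \<le> s"
        have "shiftf p y x \<le> p (x + (s / t) *\<^sub>R y) - (s / t) * p y"
          using shiftf_le[OF p, of "s/t" y x] s tp by simp
        hence "t * shiftf p y x \<le> t * p (x + (s / t) *\<^sub>R y) - s * p y"
          using tp by (simp add: field_simps)
        also have "t * p (x + (s / t) *\<^sub>R y) = p (t *\<^sub>R x + s *\<^sub>R y)"
          using sublin_scale[OF p, of t "x + (s / t) *\<^sub>R y"] tp by (simp add: algebra_simps)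
        finally show "t * shiftf p y x \<le> p (t *\<^sub>R x + s *\<^sub>R y) - s * p y" .
      qed
    qed
  qed
  show "sublin (shiftf p y)" unfolding sublin_def by (intro conjI allI impI add hom)
qed

lemma hahn_banach_sublin:
  fixes p :: "'b::real_vector \<Rightarrow> real"
  assumes p: "sublin p"
  shows "\<exists>L. linear L \<and> (\<forall>x. L x \<le> p x) \<and> L x0 = p x0"
proof -
  define S where "S = {q. sublin q \<and> (\<forall>x. q x \<le> p x) \<and> q (-x0) \<le> - p x0}"
  define r where "r = {(q1, q2). q1 \<in> S \<and> q2 \<in> S \<and> (\<forall>x. q2 x \<le> q1 x)}"
  have q0: "shiftf p x0 \<in> S" unfolding S_def using shiftf_props[OF p] by auto
  have Fr: "Field r = S" unfolding r_def Field_def by auto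
  have po: "Partial_order r"
    unfolding partial_order_on_def preorder_on_def refl_on_def trans_def antisym_def Fr
    by (auto simp: r_def intro!: ext antisym intro: order_trans)
  have ub: "\<exists>u\<in>Field r. \<forall>a\<in>C. (a, u) \<in> r" if C: "C \<in> Chains r" for C
  proof (cases "C = {}")
    case True thus ?thesis using q0 Fr by auto
  next
    case False
    have CS: "C \<subseteq> S" using C unfolding Chains_def r_def by blast
    have cmp: "\<forall>x. q2 x \<le> q1 x \<or> (\<forall>x. q1 x \<le> q2 x)" if "q1 \<in> C" "q2 \<in> C" for q1 q2
      using C that unfolding Chains_def r_def by blast
    define u where "u x = Inf ((\<lambda>q. q x) ` C)" for x
    have bdd: "bdd_below ((\<lambda>q. q x) ` C)" for x
    proof (rule bdd_belowI2[where m="- p (-x)"])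
      fix q assume "q \<in> C"
      hence "sublin q" "q (-x) \<le> p (-x)" using CS S_def by auto
      thus "- p (-x) \<le> q x" using sublin_neg[of q x] by linarith
    qed
    have ule: "u x \<le> q x" if "q \<in> C" for q x
      unfolding u_def using that bdd by (intro cInf_lower) auto
    have uge: "c \<le> u x" if "\<And>q. q \<in> C \<Longrightarrow> c \<le> q x" for c x
      unfolding u_def using that False by (intro cInf_greatest) auto
    have qS: "q \<in> C \<Longrightarrow> sublin q \<and> (\<forall>x. q x \<le> p x) \<and> q (-x0) \<le> - p x0" for q
      using CS S_def by auto
    obtain q1 where q1: "q1 \<in> C" using False by auto
    have uadd: "u (x + y) \<le> u x + u y" for x y
    proof -
      have "u (x + y) - qb y \<le> u x" if qb: "qb \<in> C" for qb
      proof (rule uge)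
        fix qa assume qa: "qa \<in> C"
        obtain q where q: "q \<in> C" "\<forall>x. q x \<le> qa x" "\<forall>x. q x \<le> qb x"
          using cmp[OF qa qb] qa qb by (metis order_refl)
        have "u (x + y) \<le> q (x + y)" using ule[OF q(1)] .
        also have "\<dots> \<le> q x + q y" using qS[OF q(1)] sublin_add by blast
        also have "\<dots> \<le> qa x + qb y" using q by (simp add: add_mono)
        finally show "u (x + y) - qb y \<le> qa x" by simp
      qed
      hence "u (x + y) - u x \<le> u y" by (intro uge) (auto simp: algebra_simps)
      thus ?thesis by simp
    qed
    have uhom: "u (t *\<^sub>R x) = t * u x" if t: "0 \<le> t" for t x
    proof (cases "t = 0")
      case True
      have "u 0 = 0"
      proof (rule antisym)
        show "u 0 \<le> 0" using ule[OF q1, of 0] qS[OF q1] sublin_zero by metis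
        show "0 \<le> u 0" by (rule uge) (use qS sublin_zero in force)
      qed
      thus ?thesis using True by simp
    next
      case False
      hence tp: "0 < t" using t by simp
      show ?thesis
      proof (rule antisym)
        have "u (t *\<^sub>R x) / t \<le> u x"
        proof (rule uge)
          fix q assume q: "q \<in> C"
          have "u (t *\<^sub>R x) \<le> q (t *\<^sub>R x)" by (rule ule[OF q])
          also have "\<dots> = t * q x" using qS[OF q] sublin_scale t by blast
          finally show "u (t *\<^sub>R x) / t \<le> q x" using tp by (simp add: field_simps)
        qed
        thus "u (t *\<^sub>R x) \<le> t * u x" using tp by (simp add: field_simps)
        show "t * u x \<le> u (t *\<^sub>R x)"
        proof (rule uge)
          fix q assume q: "q \<in> C"
          have "t * u x \<le> t * q x" using ule[OF q] tp by (simp add: mult_left_mono)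
          also have "\<dots> = q (t *\<^sub>R x)" using qS[OF q] sublin_scale t by metis
          finally show "t * u x \<le> q (t *\<^sub>R x)" .
        qed
      qed
    qed
    have uS: "u \<in> S"
    proof -
      have "u x \<le> p x" for x using ule[OF q1, of x] qS[OF q1] by (meson order_trans)
      moreover have "u (-x0) \<le> - p x0" using ule[OF q1, of "-x0"] qS[OF q1] by linarith
      ultimately show ?thesis unfolding S_def sublin_def using uadd uhom by blast
    qed
    show ?thesis
    proof (rule bexI[of _ u])
      show "u \<in> Field r" using uS Fr by simp
      show "\<forall>a\<in>C. (a, u) \<in> r" unfolding r_def using uS CS ule by auto
    qed
  qed
  obtain m where m: "m \<in> S" and mmin: "\<And>a. a \<in> S \<Longrightarrow> (m, a) \<in> r \<Longrightarrow> a = m"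
    using Zorns_po_lemma[OF po ub] Fr by auto
  have ms: "sublin m" using m S_def by auto
  have odd: "m (-y) = - m y" for y
  proof -
    have "shiftf m y \<in> S"
      using shiftf_props[OF ms, of y] m unfolding S_def
      by (auto intro: order_trans)
    moreover have "(m, shiftf m y) \<in> r"
      using calculation m shiftf_props[OF ms, of y] unfolding r_def by auto
    ultimately have "shiftf m y = m" using mmin by blast
    hence "m (-y) \<le> - m y" using shiftf_props(3)[OF ms, of y] by simp
    thus ?thesis using sublin_neg[OF ms, of y] by linarith
  qed
  have lin: "linear m"
  proof (rule linearI)
    fix x y
    have "m x = m ((x + y) + (-y))" by simp
    also have "\<dots> \<le> m (x + y) + m (-y)" by (rule sublin_add[OF ms])
    finally show "m (x + y) = m x + m y" using sublin_add[OF ms, of x y] odd[of y] by linarith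
  next
    fix t :: real and x
    show "m (t *\<^sub>R x) = t *\<^sub>R m x"
    proof (cases "0 \<le> t")
      case True thus ?thesis using sublin_scale[OF ms] by simp
    next
      case False
      have "m ((-t) *\<^sub>R (-x)) = (-t) * m (-x)" using False sublin_scale[OF ms, of "-t" "-x"] by linarith
      thus ?thesis using odd[of x] by simp
    qed
  qed
  have "m x0 = p x0"
  proof -
    have "m x0 \<le> p x0" "m (-x0) \<le> - p x0" using m unfolding S_def by auto
    thus ?thesis using odd[of x0] by linarith
  qed
  thus ?thesis using lin m S_def by auto
qed



definition mgauge :: "'b::real_vector set \<Rightarrow> 'b \<Rightarrow> real" where
  "mgauge E x = Inf {t. 0 < t \<and> inverse t *\<^sub>R x \<in> E}"

locale absconv =
  fixes E :: "'b::real_vector set"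
  assumes cvx: "convex E" and z: "0 \<in> E" and abs: "\<And>v. \<exists>s>0. s *\<^sub>R v \<in> E"
begin

lemma gset_ne: "{t. 0 < t \<and> inverse t *\<^sub>R x \<in> E} \<noteq> {}"
proof -
  obtain s where "s > 0" "s *\<^sub>R x \<in> E" using abs by blast
  hence "inverse s \<in> {t. 0 < t \<and> inverse t *\<^sub>R x \<in> E}" by simp
  thus ?thesis by blast
qed

lemma gset_bdd: "bdd_below {t. 0 < t \<and> inverse t *\<^sub>R x \<in> E}"
  by (rule bdd_belowI[where m=0]) auto

lemma gset_up:
  assumes "0 < t" "inverse t *\<^sub>R x \<in> E" "t \<le> t'"
  shows "inverse t' *\<^sub>R x \<in> E"
proof -
  have t': "0 < t'" using assms by simp
  have "inverse t' *\<^sub>R x = (t / t') *\<^sub>R (inverse t *\<^sub>R x) + (1 - t / t') *\<^sub>R 0"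
    using assms t' by (simp add: divide_inverse)
  also have "\<dots> \<in> E"
  proof (rule convexD[OF cvx])
    show "inverse t *\<^sub>R x \<in> E" using assms by simp
    show "0 \<in> E" by (rule z)
    show "0 \<le> t / t'" "0 \<le> 1 - t / t'" "t / t' + (1 - t / t') = 1" using assms t' by auto
  qed
  finally show ?thesis .
qed

lemma gauge_le: "0 < t \<Longrightarrow> inverse t *\<^sub>R x \<in> E \<Longrightarrow> mgauge E x \<le> t"
  unfolding mgauge_def by (rule cInf_lower[OF _ gset_bdd]) simp

lemma gauge_ge: "(\<And>t. 0 < t \<Longrightarrow> inverse t *\<^sub>R x \<in> E \<Longrightarrow> c \<le> t) \<Longrightarrow> c \<le> mgauge E x"
  unfolding mgauge_def by (rule cInf_greatest[OF gset_ne]) simp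

lemma gauge_nonneg: "0 \<le> mgauge E x"
  by (rule gauge_ge) simp

lemma gauge_in: "x \<in> E \<Longrightarrow> mgauge E x \<le> 1"
  using gauge_le[of 1 x] by simp

lemma gauge_lt1: "mgauge E x < 1 \<Longrightarrow> x \<in> E"
proof -
  assume "mgauge E x < 1"
  then obtain t where "0 < t" "inverse t *\<^sub>R x \<in> E" "t < 1"
    unfolding mgauge_def using cInf_less_iff[OF gset_ne gset_bdd] by auto
  hence "inverse 1 *\<^sub>R x \<in> E" using gset_up[of t x 1] by linarith
  thus ?thesis by simp
qed

lemma gauge_sublin: "sublin (mgauge E)"
proof -
  have add: "mgauge E (x + y) \<le> mgauge E x + mgauge E y" for x y
  proof -
    have key: "mgauge E (x + y) \<le> a + b" if a: "0 < a" "inverse a *\<^sub>R x \<in> E"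
      and b: "0 < b" "inverse b *\<^sub>R y \<in> E" for a b
    proof (rule gauge_le)
      show "0 < a + b" using a b by simp
      have "inverse (a + b) *\<^sub>R (x + y) =
            (a / (a + b)) *\<^sub>R (inverse a *\<^sub>R x) + (b / (a + b)) *\<^sub>R (inverse b *\<^sub>R y)"
        using a b by (simp add: scaleR_add_right inverse_eq_divide)
      also have "\<dots> \<in> E"
      proof (rule convexD[OF cvx])
        show "0 \<le> a / (a + b)" "0 \<le> b / (a + b)" using a b by auto
        show "a / (a + b) + b / (a + b) = 1" using a b by (simp add: add_divide_distrib[symmetric])
      qed (use a b in auto)
      finally show "inverse (a + b) *\<^sub>R (x + y) \<in> E" .
    qed
    have k2: "mgauge E (x + y) - b \<le> mgauge E x" if b: "0 < b" "inverse b *\<^sub>R y \<in> E" for b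
    proof (rule gauge_ge)
      fix a assume "0 < a" "inverse a *\<^sub>R x \<in> E"
      from key[OF this b] show "mgauge E (x + y) - b \<le> a" by linarith
    qed
    have "mgauge E (x + y) - mgauge E x \<le> mgauge E y"
    proof (rule gauge_ge)
      fix b assume "0 < b" "inverse b *\<^sub>R y \<in> E"
      from k2[OF this] show "mgauge E (x + y) - mgauge E x \<le> b" by linarith
    qed
    thus ?thesis by simp
  qed
  have hom: "mgauge E (t *\<^sub>R x) = t * mgauge E x" if t: "0 \<le> t" for t x
  proof (cases "t = 0")
    case True
    have "mgauge E 0 \<le> 0"
    proof (rule ccontr)
      assume "\<not> mgauge E 0 \<le> 0"
      hence "mgauge E 0 \<le> mgauge E 0 / 2" by (intro gauge_le) (use z in simp_all)
      thus False using \<open>\<not> mgauge E 0 \<le> 0\<close> by simp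
    qed
    thus ?thesis using True gauge_nonneg[of 0] by simp
  next
    case False
    hence tp: "0 < t" using t by simp
    show ?thesis
    proof (rule antisym)
      have "mgauge E (t *\<^sub>R x) / t \<le> mgauge E x"
      proof (rule gauge_ge)
        fix s assume s: "0 < s" "inverse s *\<^sub>R x \<in> E"
        have "mgauge E (t *\<^sub>R x) \<le> t * s"
        proof (rule gauge_le)
          show "0 < t * s" using s tp by simp
          have eq: "inverse (t * s) *\<^sub>R (t *\<^sub>R x) = inverse s *\<^sub>R x" using tp by simp
          show "inverse (t * s) *\<^sub>R (t *\<^sub>R x) \<in> E" unfolding eq using s(2) .
        qed
        thus "mgauge E (t *\<^sub>R x) / t \<le> s" using tp by (simp add: field_simps)
      qed
      thus "mgauge E (t *\<^sub>R x) \<le> t * mgauge E x" using tp by (simp add: field_simps)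
      show "t * mgauge E x \<le> mgauge E (t *\<^sub>R x)"
      proof (rule gauge_ge)
        fix s assume s: "0 < s" "inverse s *\<^sub>R (t *\<^sub>R x) \<in> E"
        have "mgauge E x \<le> s / t"
        proof (rule gauge_le)
          show "0 < s / t" using s tp by simp
          have eq: "inverse (s / t) *\<^sub>R x = inverse s *\<^sub>R (t *\<^sub>R x)" using tp by (simp add: field_simps)
          show "inverse (s / t) *\<^sub>R x \<in> E" unfolding eq using s(2) .
        qed
        thus "t * mgauge E x \<le> s" using tp by (simp add: field_simps)
      qed
    qed
  qed
  show ?thesis unfolding sublin_def by (intro conjI allI impI add hom)
qed

end


lemma separation:
  fixes A B :: "'b::real_vector set"
  assumes cA: "convex A" and a0: "a0 \<in> A" and cB: "convex B" and b0: "b0 \<in> B"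
    and absB: "\<And>v. \<exists>s>0. b0 + s *\<^sub>R v \<in> B" and disj: "A \<inter> B = {}"
  shows "\<exists>L::'b \<Rightarrow> real. linear L \<and> L (a0 - b0) \<ge> 1 \<and> (\<forall>a\<in>A. \<forall>b\<in>B. L b \<le> L a)"
proof -
  define p where "p = a0 - b0"
  define E where "E = {b - a + p | a b. a \<in> A \<and> b \<in> B}"
  have cE: "convex E"
  proof (rule convexI)
    fix x y :: 'b and u v :: real
    assume x: "x \<in> E" and y: "y \<in> E" and uv: "0 \<le> u" "0 \<le> v" "u + v = 1"
    obtain a1 b1 where 1: "x = b1 - a1 + p" "a1 \<in> A" "b1 \<in> B" using x E_def by auto
    obtain a2 b2 where 2: "y = b2 - a2 + p" "a2 \<in> A" "b2 \<in> B" using y E_def by auto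
    have "u *\<^sub>R x + v *\<^sub>R y = (u *\<^sub>R b1 + v *\<^sub>R b2) - (u *\<^sub>R a1 + v *\<^sub>R a2) + (u + v) *\<^sub>R p"
      unfolding 1 2 by (simp add: algebra_simps)
    also have "\<dots> = (u *\<^sub>R b1 + v *\<^sub>R b2) - (u *\<^sub>R a1 + v *\<^sub>R a2) + p" using uv by simp
    finally show "u *\<^sub>R x + v *\<^sub>R y \<in> E"
      unfolding E_def using convexD[OF cA 1(2) 2(2) uv] convexD[OF cB 1(3) 2(3) uv] by blast
  qed
  have zE: "0 \<in> E" unfolding E_def p_def using a0 b0 by force
  have absE: "\<exists>s>0. s *\<^sub>R v \<in> E" for v
  proof -
    obtain s where s: "s > 0" "b0 + s *\<^sub>R v \<in> B" using absB by blast
    have "s *\<^sub>R v = (b0 + s *\<^sub>R v) - a0 + p" unfolding p_def by simp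
    hence "s *\<^sub>R v \<in> E" unfolding E_def using s a0 by blast
    thus ?thesis using s by blast
  qed
  interpret absconv E using cE zE absE by unfold_locales auto
  have pE: "p \<notin> E"
  proof
    assume "p \<in> E"
    then obtain a b where "p = b - a + p" "a \<in> A" "b \<in> B" unfolding E_def by auto
    thus False using disj by auto
  qed
  have g1: "mgauge E p \<ge> 1" using gauge_lt1 pE by force
  obtain L where L: "linear L" "\<And>x. L x \<le> mgauge E x" "L p = mgauge E p"
    using hahn_banach_sublin[OF gauge_sublin, of p] by blast
  have "L b \<le> L a" if a: "a \<in> A" and b: "b \<in> B" for a b
  proof -
    have "b - a + p \<in> E" unfolding E_def using a b by blast
    hence "L (b - a + p) \<le> 1" using L(2) gauge_in by (meson order_trans)
    moreover have "L (b - a + p) = L b - L a + L p"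
      using L(1) by (simp add: linear_add linear_diff)
    ultimately show ?thesis using g1 L(3) by linarith
  qed
  moreover have "1 \<le> L (a0 - b0)" using L(3) g1 p_def by simp
  ultimately show ?thesis using L(1) by (intro exI[of _ L] conjI ballI) auto
qed



lemma lcs_top: "lcs \<tau> \<Longrightarrow> topspace \<tau> = UNIV" by (simp add: lcs_def)

lemma lcs_affine_cont:
  assumes "lcs \<tau>"
  shows "continuous_map \<tau> \<tau> (\<lambda>x. c *\<^sub>R x + b)"
proof -
  have tp: "topspace \<tau> = UNIV" using assms lcs_top by blast
  have sm: "continuous_map (prod_topology euclideanreal \<tau>) \<tau> (\<lambda>(a, x). a *\<^sub>R x)"
    and ad: "continuous_map (prod_topology \<tau> \<tau>) \<tau> (\<lambda>(x, y). x + y)"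
    using assms by (auto simp: lcs_def)
  have "continuous_map \<tau> (prod_topology euclideanreal \<tau>) (\<lambda>x. (c, x))"
    by (intro continuous_map_pairedI) (auto simp: tp)
  from continuous_map_compose[OF this sm]
  have s: "continuous_map \<tau> \<tau> (\<lambda>x. c *\<^sub>R x)" by (simp add: o_def)
  have "continuous_map \<tau> (prod_topology \<tau> \<tau>) (\<lambda>x. (c *\<^sub>R x, b))"
    by (intro continuous_map_pairedI s) (auto simp: tp)
  from continuous_map_compose[OF this ad]
  show ?thesis by (simp add: o_def)
qed

lemma lcs_affine_open:
  assumes "lcs \<tau>" "openin \<tau> V"
  shows "openin \<tau> {x. c *\<^sub>R x + b \<in> V}"
  using openin_continuous_map_preimage[OF lcs_affine_cont[OF assms(1)] assms(2)]
    lcs_top[OF assms(1)] by simp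

lemma lcs_segment:
  assumes l: "lcs \<tau>" and V: "openin \<tau> V" "convex V"
    and x: "x \<in> \<tau> closure_of V" and a: "a \<in> V" and t: "0 < t" "t \<le> 1"
  shows "(1 - t) *\<^sub>R x + t *\<^sub>R a \<in> V"
proof -
  define z where "z = (1 - t) *\<^sub>R x + t *\<^sub>R a"
  define Ob where "Ob = {w. (- ((1 - t) / t)) *\<^sub>R w + (inverse t *\<^sub>R z) \<in> V}"
  have oO: "openin \<tau> Ob" unfolding Ob_def by (rule lcs_affine_open[OF l V(1)])
  have xO: "x \<in> Ob"
  proof -
    have "(- ((1 - t) / t)) *\<^sub>R x + (inverse t *\<^sub>R z) = a"
      unfolding z_def using t by (simp add: algebra_simps divide_inverse scaleR_add_right)
    thus ?thesis unfolding Ob_def using a by simp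
  qed
  obtain w where w: "w \<in> V" "w \<in> Ob"
    using x oO xO unfolding in_closure_of by blast
  define g where "g = (- ((1 - t) / t)) *\<^sub>R w + (inverse t *\<^sub>R z)"
  have g: "g \<in> V" using w(2) unfolding Ob_def g_def by simp
  have "z = (1 - t) *\<^sub>R w + t *\<^sub>R g"
    unfolding g_def using t by (simp add: algebra_simps divide_inverse scaleR_add_right)
  also have "\<dots> \<in> V" using convexD[OF V(2) w(1) g, of "1 - t" t] t by simp
  finally show ?thesis unfolding z_def .
qed

lemma lcs_bounded_dual:
  assumes l: "lcs \<tau>" and f: "linear f" and G: "openin \<tau> G" "x1 \<in> G"
    and M: "\<And>x. x \<in> G \<Longrightarrow> f x \<le> M"
  shows "f \<in> dual \<tau>"
proof -
  have tp: "topspace \<tau> = UNIV" using l lcs_top by blast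
  define K where "K = M - f x1"
  have K0: "0 \<le> K" using M[OF G(2)] K_def by simp
  have "openin \<tau> {x. f x \<in> U}" if U: "open U" for U
  proof (subst openin_subopen, intro ballI)
    fix y assume y: "y \<in> {x. f x \<in> U}"
    obtain e where e: "e > 0" "ball (f y) e \<subseteq> U" using U y open_contains_ball by force
    define k where "k = (K + 1) / e"
    have kp: "k > 0" using K0 e by (simp add: k_def)
    define T where "T = {v. k *\<^sub>R v + (x1 - k *\<^sub>R y) \<in> G} \<inter> {v. (-k) *\<^sub>R v + (x1 + k *\<^sub>R y) \<in> G}"
    have oT: "openin \<tau> T" unfolding T_def
      by (intro openin_Int lcs_affine_open[OF l G(1)])
    have yT: "y \<in> T" unfolding T_def using G(2) by simp
    have "T \<subseteq> {x. f x \<in> U}"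
    proof
      fix v assume v: "v \<in> T"
      have "f (k *\<^sub>R v + (x1 - k *\<^sub>R y)) \<le> M" "f ((-k) *\<^sub>R v + (x1 + k *\<^sub>R y)) \<le> M"
        using v M unfolding T_def by auto
      hence "k * (f v - f y) \<le> K" "- (k * (f v - f y)) \<le> K"
        using f unfolding K_def
        by (simp_all add: linear_add linear_diff linear_scale algebra_simps)
      hence "\<bar>k * (f v - f y)\<bar> \<le> K" by linarith
      moreover have "\<bar>k * (f v - f y)\<bar> = k * \<bar>f v - f y\<bar>" using kp by (simp add: abs_mult)
      ultimately have "k * \<bar>f v - f y\<bar> \<le> K" by simp
      hence "\<bar>f v - f y\<bar> \<le> K / k" using kp by (simp add: field_simps)
      also have "K / k < e" using K0 e unfolding k_def by (simp add: field_simps)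
      finally have "dist (f y) (f v) < e" by (simp add: dist_real_def abs_minus_commute)
      thus "v \<in> {x. f x \<in> U}" using e by auto
    qed
    thus "\<exists>T. openin \<tau> T \<and> y \<in> T \<and> T \<subseteq> {x. f x \<in> U}" using oT yT by blast
  qed
  hence "continuous_map \<tau> euclideanreal f"
    unfolding continuous_map_def using tp by auto
  thus ?thesis using f unfolding dual_def by simp
qed

lemma dual_lin: "u \<in> dual \<tau> \<Longrightarrow> linear u" by (simp add: dual_def)

lemma dual_comb:
  assumes "u \<in> dual \<tau>" "v \<in> dual \<tau>"
  shows "(\<lambda>y. a * u y + b * v y) \<in> dual \<tau>"
proof -
  have "linear (\<lambda>y. a * u y + b * v y)"
    using assms unfolding dual_def
    by (intro linearI) (auto simp: linear_add linear_scale algebra_simps)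
  moreover have "continuous_map \<tau> euclideanreal (\<lambda>y. a * u y + b * v y)"
    using assms unfolding dual_def by (intro continuous_intros) auto
  ultimately show ?thesis by (simp add: dual_def)
qed

lemma dual_zero: "(\<lambda>y. 0) \<in> dual \<tau>"
  unfolding dual_def by (auto intro: linearI)

lemma topspace_wstar: "topspace (wstar \<tau>) = dual \<tau>"
  by (simp add: wstar_def)

lemma topspace_Ztop: "lcs \<tau> \<Longrightarrow> topspace (Ztop \<tau>) = UNIV \<times> dual \<tau>"
  by (simp add: Ztop_def topspace_wstar lcs_top)


lemma lsc_nbhd:
  assumes l: "lcs \<tau>" and h: "lsc_on_Z \<tau> h" and x0s: "x0s \<in> dual \<tau>"
    and lt: "ereal t < h (x0, x0s)"
  shows "\<exists>U E e. openin \<tau> U \<and> x0 \<in> U \<and> finite E \<and> e > 0 \<and>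
     (\<forall>x\<in>U. \<forall>xs\<in>dual \<tau>. (\<forall>i\<in>E. \<bar>xs i - x0s i\<bar> < e) \<longrightarrow> ereal t < h (x, xs))"
proof -
  define C where "C = {z \<in> topspace (Ztop \<tau>). h z \<le> ereal t}"
  have cC: "closedin (Ztop \<tau>) C" using h unfolding lsc_on_Z_def C_def by blast
  define G where "G = topspace (Ztop \<tau>) - C"
  have oG: "openin (prod_topology \<tau> (wstar \<tau>)) G"
    using cC unfolding G_def Ztop_def by (simp add: openin_diff closedin_def)
  have zG: "(x0, x0s) \<in> G" unfolding G_def C_def using lt x0s topspace_Ztop[OF l] by auto
  obtain U W where UW: "openin \<tau> U" "openin (wstar \<tau>) W" "x0 \<in> U" "x0s \<in> W" "U \<times> W \<subseteq> G"
    using oG zG unfolding openin_prod_topology_alt by meson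
  obtain T where T: "openin (powertop_real UNIV) T" "W = T \<inter> dual \<tau>"
    using UW(2) unfolding wstar_def openin_subtopology by blast
  obtain P where P: "finite {i \<in> UNIV. P i \<noteq> topspace euclideanreal}"
    "\<forall>i\<in>UNIV. openin euclideanreal (P i)" "x0s \<in> Pi\<^sub>E UNIV P" "Pi\<^sub>E UNIV P \<subseteq> T"
  proof -
    have "x0s \<in> T" using UW(4) T(2) by blast
    thus ?thesis using that T(1) unfolding openin_product_topology_alt by meson
  qed
  define E where "E = {i. P i \<noteq> UNIV}"
  have fE: "finite E" using P(1) unfolding E_def by simp
  have "\<exists>d>0. ball (x0s i) d \<subseteq> P i" for i
  proof -
    have "x0s i \<in> P i" using P(3) by (simp add: PiE_iff)
    moreover have "open (P i)" using P(2) by simp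
    ultimately show ?thesis using open_contains_ball by blast
  qed
  then obtain d where d: "\<And>i. d i > 0" "\<And>i. ball (x0s i) (d i) \<subseteq> P i" by metis
  define e where "e = (if E = {} then 1 else Min (d ` E))"
  have e0: "e > 0" unfolding e_def using fE d(1) by auto
  have ed: "e \<le> d i" if "i \<in> E" for i unfolding e_def using fE that by auto
  have "ereal t < h (x, xs)" if x: "x \<in> U" and xs: "xs \<in> dual \<tau>"
    and cl: "\<forall>i\<in>E. \<bar>xs i - x0s i\<bar> < e" for x xs
  proof -
    have "xs i \<in> P i" for i
    proof (cases "i \<in> E")
      case True
      hence "\<bar>xs i - x0s i\<bar> < d i" using cl ed by fastforce
      thus ?thesis using d(2)[of i] by (auto simp: dist_real_def abs_minus_commute)
    next
      case False thus ?thesis unfolding E_def by simp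
    qed
    hence "xs \<in> Pi\<^sub>E UNIV P" by (simp add: PiE_iff)
    hence "xs \<in> W" using P(4) T(2) xs by blast
    hence "(x, xs) \<in> G" using UW(5) x by blast
    thus ?thesis unfolding G_def C_def using topspace_Ztop[OF l] xs by auto
  qed
  thus ?thesis using UW(1,3) fE e0 by blast
qed



lemma frac_lt:
  fixes e K :: real
  assumes "0 < e" shows "(e / (2 * (\<bar>K\<bar> + 1))) * \<bar>K\<bar> < e"
proof -
  have pos: "0 < 2 * (\<bar>K\<bar> + 1)" by (simp add: add_pos_nonneg)
  have "e * \<bar>K\<bar> < e * (2 * (\<bar>K\<bar> + 1))" using assms by (intro mult_strict_left_mono) auto
  hence "e * \<bar>K\<bar> / (2 * (\<bar>K\<bar> + 1)) < e" using pos by (simp add: pos_divide_less_eq)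
  thus ?thesis by simp
qed
lemma frac_pos:
  fixes e K :: real
  assumes "0 < e" shows "0 < e / (2 * (\<bar>K\<bar> + 1))"
  using assms by (simp add: add_pos_nonneg)

lemma fitz_le:
  assumes "\<And>u us. (u, us) \<in> R \<Longrightarrow> us x + xs u - us u \<le> a"
  shows "fitz R (x, xs) \<le> ereal a"
  unfolding fitz_def by (rule SUP_least) (use assms in auto)

lemma fitz_ge:
  assumes "(u, us) \<in> R"
  shows "ereal (us x + xs u - us u) \<le> fitz R (x, xs)"
  unfolding fitz_def by (rule SUP_upper2[OF assms]) simp

lemma fitz_mono: "R \<subseteq> R' \<Longrightarrow> fitz R z \<le> fitz R' z"
  unfolding fitz_def by (rule SUP_subset_mono) auto

lemma fitz_conv:
  assumes lin: "\<And>u us. (u, us) \<in> R \<Longrightarrow> linear us"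
    and f1: "fitz R (x1, xs1) \<le> ereal a1" and f2: "fitz R (x2, xs2) \<le> ereal a2"
    and t: "0 \<le> t" "t \<le> 1"
  shows "fitz R (t *\<^sub>R x1 + (1 - t) *\<^sub>R x2, \<lambda>v. t * xs1 v + (1 - t) * xs2 v) \<le> ereal (t * a1 + (1 - t) * a2)"
proof (rule fitz_le)
  fix u us assume p: "(u, us) \<in> R"
  have 1: "us x1 + xs1 u - us u \<le> a1" using order_trans[OF fitz_ge[OF p] f1] by simp
  have 2: "us x2 + xs2 u - us u \<le> a2" using order_trans[OF fitz_ge[OF p] f2] by simp
  have "us (t *\<^sub>R x1 + (1 - t) *\<^sub>R x2) = t * us x1 + (1 - t) * us x2"
    using lin[OF p] by (simp add: linear_add linear_scale)
  hence "us (t *\<^sub>R x1 + (1 - t) *\<^sub>R x2) + (t * xs1 u + (1 - t) * xs2 u) - us u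
      = t * (us x1 + xs1 u - us u) + (1 - t) * (us x2 + xs2 u - us u)"
    by (simp add: algebra_simps)
  also have "\<dots> \<le> t * a1 + (1 - t) * a2"
    using 1 2 t by (intro add_mono mult_left_mono) auto
  finally show "us (t *\<^sub>R x1 + (1 - t) *\<^sub>R x2) + (t * xs1 u + (1 - t) * xs2 u) - us u
      \<le> t * a1 + (1 - t) * a2" .
qed

lemma mono_term:
  assumes "monotone_op R" "(b, bs) \<in> R" "(u, us) \<in> R" "linear us" "linear bs"
  shows "us b + bs u - us u \<le> bs b"
proof -
  have m: "\<forall>(x, u) \<in> R. \<forall>(y, v) \<in> R. 0 \<le> u (x - y) - v (x - y)"
    using assms(1) unfolding monotone_op_def .
  have "\<forall>(y, v) \<in> R. 0 \<le> bs (b - y) - v (b - y)" using bspec[OF m assms(2)] by simp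
  from bspec[OF this assms(3)] have "0 \<le> bs (b - u) - us (b - u)" by simp
  thus ?thesis using assms(4,5) by (simp add: linear_diff)
qed

lemma fitz_self:
  assumes "monotone_op R" "(b, bs) \<in> R" "\<And>u us. (u, us) \<in> R \<Longrightarrow> linear us"
  shows "fitz R (b, bs) \<le> ereal (bs b)"
  using assms mono_term by (intro fitz_le) blast

lemma lcs_ray_cont:
  assumes "lcs \<tau>"
  shows "continuous_map euclideanreal \<tau> (\<lambda>s. b + s *\<^sub>R v)"
proof -
  have tp: "topspace \<tau> = UNIV" using assms lcs_top by blast
  have sm: "continuous_map (prod_topology euclideanreal \<tau>) \<tau> (\<lambda>(a, x). a *\<^sub>R x)"
    and ad: "continuous_map (prod_topology \<tau> \<tau>) \<tau> (\<lambda>(x, y). x + y)"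
    using assms by (auto simp: lcs_def)
  have "continuous_map euclideanreal (prod_topology euclideanreal \<tau>) (\<lambda>s. (s, v))"
    by (intro continuous_map_pairedI) (auto simp: tp)
  from continuous_map_compose[OF this sm]
  have s: "continuous_map euclideanreal \<tau> (\<lambda>s. s *\<^sub>R v)" by (simp add: o_def)
  have "continuous_map euclideanreal (prod_topology \<tau> \<tau>) (\<lambda>s. (b, s *\<^sub>R v))"
    by (intro continuous_map_pairedI s) (auto simp: tp)
  from continuous_map_compose[OF this ad]
  show ?thesis by (simp add: o_def)
qed

lemma lcs_ray:
  assumes "lcs \<tau>" "openin \<tau> V" "b \<in> V"
  shows "\<exists>s>0. b + s *\<^sub>R v \<in> V"
proof -
  have "openin euclideanreal {s. b + s *\<^sub>R v \<in> V}"
    using openin_continuous_map_preimage[OF lcs_ray_cont[OF assms(1)] assms(2)] by simp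
  hence "open {s. b + s *\<^sub>R v \<in> V}" by simp
  moreover have "0 \<in> {s. b + s *\<^sub>R v \<in> V}" using assms(3) by simp
  ultimately obtain e where e: "e > 0" "ball 0 e \<subseteq> {s. b + s *\<^sub>R v \<in> V}"
    using open_contains_ball by blast
  moreover have "e / 2 \<in> ball 0 e" using e(1) by simp
  ultimately have "b + (e / 2) *\<^sub>R v \<in> V" by blast
  thus ?thesis using e(1) by (intro exI[of _ "e/2"]) auto
qed

locale setting =
  fixes \<tau> :: "'a::real_vector topology" and T :: "('a \<times> ('a \<Rightarrow> real)) set" and V :: "'a set"
  assumes l: "lcs \<tau>" and op: "operator \<tau> T" and oV: "openin \<tau> V" and cV: "convex V"
    and MX: "restr T V \<in> MX \<tau>" and NI: "NI \<tau> V T"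
begin

abbreviation "R \<equiv> restr T V"
abbreviation "clV \<equiv> \<tau> closure_of V"

lemma R_dual: "(u, us) \<in> R \<Longrightarrow> us \<in> dual \<tau>"
  using op unfolding operator_def restr_def by auto
lemma R_lin: "(u, us) \<in> R \<Longrightarrow> linear us"
  using R_dual dual_lin by blast
lemma R_V: "(u, us) \<in> R \<Longrightarrow> u \<in> V"
  unfolding restr_def by auto
lemma R_mono: "monotone_op R" using MX unfolding MX_def by auto
lemma R_ne: "R \<noteq> {}" using MX unfolding MX_def by auto
lemma R_self: "(b, bs) \<in> R \<Longrightarrow> fitz R (b, bs) \<le> ereal (bs b)"
  by (rule fitz_self[OF R_mono]) (auto intro: R_lin)

lemma NI': "y \<in> V \<Longrightarrow> ys \<in> dual \<tau> \<Longrightarrow> ereal (ys y) \<le> fitz R (y, ys)"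
  using NI unfolding NI_def cpl_def by auto

lemma fitz_conv':
  assumes "fitz R (x1, xs1) \<le> ereal a1" "fitz R (x2, xs2) \<le> ereal a2" "0 \<le> t" "t \<le> 1"
  shows "fitz R (t *\<^sub>R x1 + (1 - t) *\<^sub>R x2, \<lambda>v. t * xs1 v + (1 - t) * xs2 v) \<le> ereal (t * a1 + (1 - t) * a2)"
  by (rule fitz_conv[OF R_lin assms])

lemma part1:
  assumes x: "x \<in> clV" and xs: "xs \<in> dual \<tau>"
  shows "ereal (xs x) \<le> fitz R (x, xs)"
proof (rule ccontr)
  assume "\<not> ereal (xs x) \<le> fitz R (x, xs)"
  hence "fitz R (x, xs) < ereal (xs x)" by simp
  then obtain a where a: "fitz R (x, xs) < ereal a" "ereal a < ereal (xs x)"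
    using ereal_dense2 by blast
  define \<epsilon> where "\<epsilon> = xs x - a"
  have ep: "\<epsilon> > 0" using a(2) \<epsilon>_def by simp
  obtain b bs where bR: "(b, bs) \<in> R" using R_ne by auto
  have bV: "b \<in> V" using R_V[OF bR] .
  have bs: "bs \<in> dual \<tau>" using R_dual[OF bR] .
  define K where "K = xs x + bs b - xs b - bs x"
  define t where "t = min (1/2) (\<epsilon> / (2 * (\<bar>K\<bar> + 1)))"
  have "0 < \<epsilon> / (2 * (\<bar>K\<bar> + 1))" using frac_pos[OF ep] .
  hence t0: "0 < t" "t \<le> 1/2" unfolding t_def by (auto simp: min_def)
  have tK: "t * K < \<epsilon>"
  proof -
    have "t * K \<le> t * \<bar>K\<bar>" using t0 by (simp add: mult_left_mono)
    also have "\<dots> \<le> (\<epsilon> / (2 * (\<bar>K\<bar> + 1))) * \<bar>K\<bar>" unfolding t_def by (intro mult_right_mono) auto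
    also have "\<dots> < \<epsilon>" using frac_lt[OF ep] .
    finally show ?thesis .
  qed
  define y where "y = (1 - t) *\<^sub>R x + t *\<^sub>R b"
  define ys where "ys = (\<lambda>v. (1 - t) * xs v + t * bs v)"
  have yV: "y \<in> V" unfolding y_def using lcs_segment[OF l oV cV x bV t0(1)] t0 by simp
  have ysd: "ys \<in> dual \<tau>" unfolding ys_def using dual_comb[OF xs bs] by simp
  have "fitz R (y, ys) \<le> ereal ((1 - t) * a + (1 - (1 - t)) * (bs b))"
    unfolding y_def ys_def using fitz_conv'[OF less_imp_le[OF a(1)] R_self[OF bR], of "1 - t"] t0
    by simp
  hence "ereal (ys y) \<le> ereal ((1 - t) * a + (1 - (1 - t)) * (bs b))"
    using order_trans[OF NI'[OF yV ysd]] by blast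
  hence ineq: "ys y \<le> (1 - t) * a + t * bs b" by simp
  have lx: "linear xs" "linear bs" using xs bs dual_lin by auto
  have "ys y = (1 - t) * ((1 - t) * xs x + t * xs b) + t * ((1 - t) * bs x + t * bs b)"
    unfolding ys_def y_def using lx by (simp add: linear_add linear_scale)
  hence "(1 - t) * ((1 - t) * xs x + t * xs b) + t * ((1 - t) * bs x + t * bs b) \<le> (1 - t) * a + t * bs b"
    using ineq by simp
  moreover have "(1 - t) * (t * K) - (1 - t) * \<epsilon> = ((1 - t) * a + t * bs b) -
     ((1 - t) * ((1 - t) * xs x + t * xs b) + t * ((1 - t) * bs x + t * bs b))"
    unfolding \<epsilon>_def K_def by (simp add: algebra_simps)
  ultimately have "(1 - t) * \<epsilon> \<le> (1 - t) * (t * K)" by linarith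
  hence "\<epsilon> \<le> t * K" using t0 by simp
  thus False using tK by simp
qed

lemma part2:
  assumes x0: "x0 \<in> clV" and x0s: "x0s \<in> dual \<tau>" and rel: "fitz R (x0, x0s) \<le> ereal (x0s x0)"
    and y: "y \<in> V" and ys: "ys \<in> dual \<tau>"
  shows "ereal (x0s y - x0s x0 + ys x0) \<le> fitz R (y, ys)"
proof (rule ccontr)
  define Rr where "Rr = x0s y - x0s x0 + ys x0"
  assume "\<not> ereal (x0s y - x0s x0 + ys x0) \<le> fitz R (y, ys)"
  hence "fitz R (y, ys) < ereal Rr" unfolding Rr_def by simp
  then obtain p where p: "fitz R (y, ys) < ereal p" "ereal p < ereal Rr"
    using ereal_dense2 by blast
  have pR: "p < Rr" using p(2) by simp
  define cy where "cy = ys y"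
  define t where "t = min 1 ((Rr - p) / (2 * (\<bar>cy - Rr\<bar> + 1)))"
  have "0 < (Rr - p) / (2 * (\<bar>cy - Rr\<bar> + 1))" by (rule frac_pos) (use pR in simp)
  hence t0: "0 < t" "t \<le> 1" unfolding t_def by (auto simp: min_def)
  have tb: "t * \<bar>cy - Rr\<bar> < Rr - p"
  proof -
    have "t * \<bar>cy - Rr\<bar> \<le> ((Rr - p) / (2 * (\<bar>cy - Rr\<bar> + 1))) * \<bar>cy - Rr\<bar>"
      unfolding t_def by (intro mult_right_mono) auto
    also have "\<dots> < Rr - p" by (rule frac_lt) (use pR in simp)
    finally show ?thesis .
  qed
  define z where "z = (1 - t) *\<^sub>R x0 + t *\<^sub>R y"
  define zs where "zs = (\<lambda>v. (1 - t) * x0s v + t * ys v)"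
  have zV: "z \<in> V" unfolding z_def using lcs_segment[OF l oV cV x0 y t0] .
  have zsd: "zs \<in> dual \<tau>" unfolding zs_def using dual_comb[OF x0s ys] by simp
  have "fitz R (z, zs) \<le> ereal ((1 - t) * (x0s x0) + (1 - (1 - t)) * p)"
    unfolding z_def zs_def using fitz_conv'[OF rel less_imp_le[OF p(1)], of "1 - t"] t0
    by simp
  hence "ereal (zs z) \<le> ereal ((1 - t) * (x0s x0) + (1 - (1 - t)) * p)"
    using order_trans[OF NI'[OF zV zsd]] by blast
  hence ineq: "zs z \<le> (1 - t) * x0s x0 + t * p" by simp
  have lx: "linear x0s" "linear ys" using x0s ys dual_lin by auto
  have "zs z = (1 - t) * ((1 - t) * x0s x0 + t * x0s y) + t * ((1 - t) * ys x0 + t * ys y)"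
    unfolding zs_def z_def using lx by (simp add: linear_add linear_scale)
  hence "(1 - t) * ((1 - t) * x0s x0 + t * x0s y) + t * ((1 - t) * ys x0 + t * cy) \<le> (1 - t) * x0s x0 + t * p"
    using ineq cy_def by simp
  moreover have "t * p - t * ((1 - t) * Rr + t * cy) = ((1 - t) * x0s x0 + t * p) -
     ((1 - t) * ((1 - t) * x0s x0 + t * x0s y) + t * ((1 - t) * ys x0 + t * cy))"
    unfolding Rr_def by (simp add: algebra_simps)
  ultimately have "t * ((1 - t) * Rr + t * cy) \<le> t * p" by linarith
  hence "(1 - t) * Rr + t * cy \<le> p" using t0 by simp
  moreover have "Rr - t * \<bar>cy - Rr\<bar> \<le> (1 - t) * Rr + t * cy"
  proof -
    have "- (t * \<bar>cy - Rr\<bar>) \<le> t * (cy - Rr)"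
      using mult_left_mono[of "- \<bar>cy - Rr\<bar>" "cy - Rr" t] t0 by simp
    moreover have "(1 - t) * Rr + t * cy = Rr + t * (cy - Rr)" by (simp add: algebra_simps)
    ultimately show ?thesis by linarith
  qed
  ultimately show False using tb by linarith
qed

end



instantiation "fun" :: (type, real_vector) real_vector
begin
definition scaleR_fun :: "real \<Rightarrow> ('a \<Rightarrow> 'b) \<Rightarrow> 'a \<Rightarrow> 'b" where
  "scaleR_fun r f = (\<lambda>x. r *\<^sub>R f x)"
instance
  by standard (simp_all add: scaleR_fun_def fun_eq_iff scaleR_add_right scaleR_add_left)
end

lemma scaleR_fun_app [simp]: "(r *\<^sub>R f) x = r *\<^sub>R f x" by (simp add: scaleR_fun_def)

lemma sum_fun_app: "finite E \<Longrightarrow> (\<Sum>i\<in>E. F i) x = (\<Sum>i\<in>E. F i x)"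
  by (induct E rule: finite_induct) auto

lemma test_L:
  fixes L :: "'a::real_vector \<times> ('a \<Rightarrow> real) \<times> real \<Rightarrow> real"
  assumes "linear L"
  shows "L (x, xs, r) = L (x, 0, 0) + L (0, xs, 0) + r * L (0, 0, 1)"
proof -
  have "(x, xs, r) = (x, 0, 0) + (0, xs, 0) + r *\<^sub>R (0, 0, 1)" by simp
  hence "L (x, xs, r) = L ((x, 0, 0) + (0, xs, 0) + r *\<^sub>R (0, 0, 1))" by metis
  also have "\<dots> = L (x, 0, 0) + L (0, xs, 0) + r *\<^sub>R L (0, 0, 1)"
    by (simp only: linear_add[OF assms] linear_scale[OF assms])
  finally show ?thesis by simp
qed


lemma convex_ray:
  assumes "convex W" "x0 \<in> W" "x0 + s *\<^sub>R v \<in> W" "0 < s" "0 \<le> s'" "s' \<le> s"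
  shows "x0 + s' *\<^sub>R v \<in> W"
proof -
  have "x0 + s' *\<^sub>R v = (1 - s' / s) *\<^sub>R x0 + (s' / s) *\<^sub>R (x0 + s *\<^sub>R v)"
    using assms(4) by (simp add: algebra_simps)
  also have "\<dots> \<in> W" using assms by (intro convexD) auto
  finally show ?thesis .
qed

lemma lin_embed1:
  fixes L :: "'b::real_vector \<times> 'c::real_vector \<times> real \<Rightarrow> real"
  assumes "linear L" shows "linear (\<lambda>x. L (x, 0, 0))"
proof (rule linearI)
  fix x y :: 'b
  have "L (x + y, 0, 0) = L ((x, 0, 0) + (y, 0, 0))" by simp
  thus "L (x + y, 0, 0) = L (x, 0, 0) + L (y, 0, 0)" by (simp only: linear_add[OF assms])
next
  fix c :: real and x :: 'b
  have "L (c *\<^sub>R x, 0, 0) = L (c *\<^sub>R (x, 0, 0))" by simp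
  thus "L (c *\<^sub>R x, 0, 0) = c *\<^sub>R L (x, 0, 0)" by (simp only: linear_scale[OF assms])
qed

lemma lin_embed2:
  fixes L :: "'b::real_vector \<times> 'c::real_vector \<times> real \<Rightarrow> real"
  assumes "linear L" shows "linear (\<lambda>x. L (0, x, 0))"
proof (rule linearI)
  fix x y :: 'c
  have "L (0, x + y, 0) = L ((0, x, 0) + (0, y, 0))" by simp
  thus "L (0, x + y, 0) = L (0, x, 0) + L (0, y, 0)" by (simp only: linear_add[OF assms])
next
  fix c :: real and x :: 'c
  have "L (0, c *\<^sub>R x, 0) = L (c *\<^sub>R (0, x, 0))" by simp
  thus "L (0, c *\<^sub>R x, 0) = c *\<^sub>R L (0, x, 0)" by (simp only: linear_scale[OF assms])
qed

lemma finite_dep: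
  fixes g :: "('a \<Rightarrow> real) \<Rightarrow> real"
  assumes g: "linear g" and E: "finite E" and van: "\<And>ds. (\<forall>i\<in>E. ds i = 0) \<Longrightarrow> g ds = 0"
  shows "g xs = (\<Sum>i\<in>E. xs i * g (\<lambda>j. if j = i then 1 else 0))"
proof -
  define D where "D = (\<Sum>i\<in>E. xs i *\<^sub>R (\<lambda>j. if j = i then (1::real) else 0))"
  have Dapp: "D k = (if k \<in> E then xs k else 0)" for k
    unfolding D_def using E by (simp add: sum_fun_app if_distrib sum.delta cong: if_cong)
  have "g (xs - D) = 0" by (rule van) (simp add: Dapp)
  hence "g xs = g D" using g by (simp add: linear_diff)
  also have "g D = (\<Sum>i\<in>E. xs i * g (\<lambda>j. if j = i then 1 else 0))"
    unfolding D_def using g by (simp add: linear_sum linear_scale)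
  finally show ?thesis .
qed

lemma lemmaL:
  fixes \<tau> :: "'a::real_vector topology" and R :: "('a \<times> ('a \<Rightarrow> real)) set"
  assumes l: "lcs \<tau>" and cv: "convex_on_Z \<tau> h" and ls: "lsc_on_Z \<tau> h" and pr: "proper_on \<tau> h"
    and hR: "\<And>u us. (u, us) \<in> R \<Longrightarrow> h (u, us) \<le> ereal (us u)"
    and Rd: "\<And>u us. (u, us) \<in> R \<Longrightarrow> us \<in> dual \<tau>"
    and Rm: "monotone_op R" and Rne: "R \<noteq> {}"
    and x0s: "x0s \<in> dual \<tau>"
    and hyp: "\<And>y ys. ys \<in> dual \<tau> \<Longrightarrow> ereal (x0s y + ys x0 - \<beta>) \<le> fitz R (y, ys)"
  shows "h (x0, x0s) \<le> ereal \<beta>"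
proof (rule ccontr)
  assume "\<not> h (x0, x0s) \<le> ereal \<beta>"
  hence "ereal \<beta> < h (x0, x0s)" by simp
  then obtain t0 where t0: "ereal \<beta> < ereal t0" "ereal t0 < h (x0, x0s)" using ereal_dense2 by blast
  have bt: "\<beta> < t0" using t0(1) by simp
  obtain U1 E e where nb: "openin \<tau> U1" "x0 \<in> U1" "finite E" "e > 0"
    "\<And>x xs. x \<in> U1 \<Longrightarrow> xs \<in> dual \<tau> \<Longrightarrow> (\<forall>i\<in>E. \<bar>xs i - x0s i\<bar> < e) \<Longrightarrow> ereal t0 < h (x, xs)"
    using lsc_nbhd[OF l ls x0s t0(2)] by metis
  obtain W1 where W1: "openin \<tau> W1" "convex W1" "x0 \<in> W1" "W1 \<subseteq> U1"
    using l nb(1,2) unfolding lcs_def by metis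
  define B where "B = {(x, xs, r). x \<in> W1 \<and> (\<forall>i\<in>E. \<bar>xs i - x0s i\<bar> < e) \<and> r < t0}"
  define A where "A = {(x, xs, r). xs \<in> dual \<tau> \<and> h (x, xs) < ereal r}"
  define b0 where "b0 = (x0, x0s, \<beta>)"
  have b0B: "b0 \<in> B" unfolding b0_def B_def using W1(3) bt nb(4) by simp
  have hfin: "\<exists>c. h (x, xs) = ereal c" if "xs \<in> dual \<tau>" "h (x, xs) < ereal r" for x xs r
  proof -
    have "h (x, xs) \<noteq> - \<infinity>" using pr that(1) unfolding proper_on_def by auto
    moreover have "h (x, xs) \<noteq> \<infinity>" using that(2) by auto
    ultimately show ?thesis by (cases "h (x, xs)") auto
  qed
  obtain a0 where a0A: "a0 \<in> A"
  proof -
    obtain z where z: "z \<in> UNIV \<times> dual \<tau>" "h z \<noteq> \<infinity>" using pr unfolding proper_on_def by auto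
    have "h z \<noteq> - \<infinity>" using pr z(1) unfolding proper_on_def by auto
    then obtain c where c: "h z = ereal c" using z(2) by (cases "h z") auto
    have "(fst z, snd z, c + 1) \<in> A" unfolding A_def using z(1) c by auto
    thus ?thesis using that by blast
  qed
  have cA: "convex A"
  proof (rule convexI)
    fix p1 p2 :: "'a \<times> ('a \<Rightarrow> real) \<times> real" and u v :: real
    assume p1: "p1 \<in> A" and p2: "p2 \<in> A" and uv: "0 \<le> u" "0 \<le> v" "u + v = 1"
    obtain x1 xs1 r1 where e1: "p1 = (x1, xs1, r1)" by (cases p1) auto
    obtain x2 xs2 r2 where e2: "p2 = (x2, xs2, r2)" by (cases p2) auto
    have d1: "xs1 \<in> dual \<tau>" "h (x1, xs1) < ereal r1" using p1 e1 A_def by auto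
    have d2: "xs2 \<in> dual \<tau>" "h (x2, xs2) < ereal r2" using p2 e2 A_def by auto
    obtain c1 where c1: "h (x1, xs1) = ereal c1" using hfin[OF d1] by blast
    obtain c2 where c2: "h (x2, xs2) = ereal c2" using hfin[OF d2] by blast
    have v: "v = 1 - u" using uv by simp
    have "h (u *\<^sub>R x1 + (1 - u) *\<^sub>R x2, \<lambda>a. u * xs1 a + (1 - u) * xs2 a)
          \<le> ereal u * h (x1, xs1) + ereal (1 - u) * h (x2, xs2)"
      using cv d1(1) d2(1) uv unfolding convex_on_Z_def v by auto
    also have "\<dots> = ereal (u * c1 + (1 - u) * c2)" using c1 c2 by simp
    also have "\<dots> < ereal (u * r1 + (1 - u) * r2)"
    proof -
      have "c1 < r1" "c2 < r2" using d1(2) d2(2) c1 c2 by auto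
      hence "u * c1 + (1 - u) * c2 < u * r1 + (1 - u) * r2"
      proof (cases "u = 0")
        case True thus ?thesis using \<open>c2 < r2\<close> by simp
      next
        case False
        hence "u * c1 < u * r1" using uv \<open>c1 < r1\<close> by (intro mult_strict_left_mono) auto
        moreover have "(1 - u) * c2 \<le> (1 - u) * r2" using uv v \<open>c2 < r2\<close> by (intro mult_left_mono) auto
        ultimately show ?thesis by linarith
      qed
      thus ?thesis by simp
    qed
    finally have hlt: "h (u *\<^sub>R x1 + (1 - u) *\<^sub>R x2, \<lambda>a. u * xs1 a + (1 - u) * xs2 a)
          < ereal (u * r1 + (1 - u) * r2)" .
    have eqc: "u *\<^sub>R p1 + v *\<^sub>R p2 = (u *\<^sub>R x1 + (1 - u) *\<^sub>R x2, \<lambda>a. u * xs1 a + (1 - u) * xs2 a, u * r1 + (1 - u) * r2)"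
      unfolding e1 e2 v by (simp add: fun_eq_iff)
    show "u *\<^sub>R p1 + v *\<^sub>R p2 \<in> A"
      unfolding eqc A_def using hlt dual_comb[OF d1(1) d2(1)] by simp
  qed
  have cB: "convex B"
  proof (rule convexI)
    fix p1 p2 :: "'a \<times> ('a \<Rightarrow> real) \<times> real" and u v :: real
    assume p1: "p1 \<in> B" and p2: "p2 \<in> B" and uv: "0 \<le> u" "0 \<le> v" "u + v = 1"
    obtain x1 xs1 r1 where e1: "p1 = (x1, xs1, r1)" by (cases p1) auto
    obtain x2 xs2 r2 where e2: "p2 = (x2, xs2, r2)" by (cases p2) auto
    have d1: "x1 \<in> W1" "\<forall>i\<in>E. \<bar>xs1 i - x0s i\<bar> < e" "r1 < t0" using p1 e1 B_def by auto
    have d2: "x2 \<in> W1" "\<forall>i\<in>E. \<bar>xs2 i - x0s i\<bar> < e" "r2 < t0" using p2 e2 B_def by auto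
    have "u *\<^sub>R x1 + v *\<^sub>R x2 \<in> W1" using convexD[OF W1(2) d1(1) d2(1) uv] .
    moreover have "\<bar>u * xs1 i + v * xs2 i - x0s i\<bar> < e" if i: "i \<in> E" for i
    proof -
      have "u * x0s i + v * x0s i = x0s i" using uv by (simp flip: distrib_right)
      hence "u * xs1 i + v * xs2 i - x0s i = u * (xs1 i - x0s i) + v * (xs2 i - x0s i)"
        by (simp add: algebra_simps)
      hence "\<bar>u * xs1 i + v * xs2 i - x0s i\<bar> \<le> u * \<bar>xs1 i - x0s i\<bar> + v * \<bar>xs2 i - x0s i\<bar>"
        using uv by (simp add: abs_mult abs_triangle_ineq[THEN order_trans])
      also have "\<dots> \<le> u * max \<bar>xs1 i - x0s i\<bar> \<bar>xs2 i - x0s i\<bar> + v * max \<bar>xs1 i - x0s i\<bar> \<bar>xs2 i - x0s i\<bar>"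
        using uv by (intro add_mono mult_left_mono) auto
      also have "\<dots> = max \<bar>xs1 i - x0s i\<bar> \<bar>xs2 i - x0s i\<bar>" using uv by (simp add: algebra_simps flip: distrib_right)
      also have "\<dots> < e" using d1(2) d2(2) i by auto
      finally show ?thesis .
    qed
    moreover have "u * r1 + v * r2 < t0"
    proof -
      have "u * r1 + v * r2 \<le> u * max r1 r2 + v * max r1 r2" using uv by (intro add_mono mult_left_mono) auto
      also have "\<dots> = max r1 r2" using uv by (simp flip: distrib_right)
      finally show ?thesis using d1(3) d2(3) by linarith
    qed
    ultimately show "u *\<^sub>R p1 + v *\<^sub>R p2 \<in> B" unfolding e1 e2 B_def by simp
  qed
  have absB: "\<exists>s>0. b0 + s *\<^sub>R v \<in> B" for v
  proof -
    obtain v1 v2 v3 where ev: "v = (v1, v2, v3)" by (cases v) auto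
    obtain s1 where s1: "s1 > 0" "x0 + s1 *\<^sub>R v1 \<in> W1" using lcs_ray[OF l W1(1) W1(3)] by blast
    define M where "M = (\<Sum>i\<in>E. \<bar>v2 i\<bar>)"
    have M0: "0 \<le> M" unfolding M_def by (simp add: sum_nonneg)
    have Mi: "\<bar>v2 i\<bar> \<le> M" if "i \<in> E" for i
      unfolding M_def using nb(3) that by (intro member_le_sum) auto
    define s where "s = min s1 (min (e / (M + 1)) ((t0 - \<beta>) / (\<bar>v3\<bar> + 1)))"
    have s0: "0 < s" unfolding s_def using s1 nb(4) M0 bt by (auto intro!: divide_pos_pos simp: add_nonneg_pos)
    have "x0 + s *\<^sub>R v1 \<in> W1" using convex_ray[OF W1(2) W1(3) s1(2) s1(1)] s0 by (simp add: s_def)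
    moreover have "\<bar>s * v2 i\<bar> < e" if i: "i \<in> E" for i
    proof -
      have "\<bar>s * v2 i\<bar> = s * \<bar>v2 i\<bar>" using s0 by (simp add: abs_mult)
      also have "\<dots> \<le> (e / (M + 1)) * M" using Mi[OF i] s0 by (intro mult_mono) (auto simp: s_def)
      also have "\<dots> < e" using nb(4) M0 by (simp add: field_simps)
      finally show ?thesis .
    qed
    moreover have "\<beta> + s * v3 < t0"
    proof -
      have "s * v3 \<le> s * \<bar>v3\<bar>" using s0 by (simp add: mult_left_mono)
      also have "\<dots> \<le> ((t0 - \<beta>) / (\<bar>v3\<bar> + 1)) * \<bar>v3\<bar>" using s0 by (intro mult_right_mono) (auto simp: s_def)
      also have "\<dots> < t0 - \<beta>" using bt by (simp add: field_simps)
      finally show ?thesis by simp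
    qed
    ultimately have "b0 + s *\<^sub>R v \<in> B" unfolding b0_def ev B_def by simp
    thus ?thesis using s0 by blast
  qed
  have disj: "A \<inter> B = {}"
  proof (rule ccontr)
    assume "A \<inter> B \<noteq> {}"
    then obtain x xs r where p: "(x, xs, r) \<in> A" "(x, xs, r) \<in> B" by auto
    hence "xs \<in> dual \<tau>" "h (x, xs) < ereal r" "x \<in> U1" "\<forall>i\<in>E. \<bar>xs i - x0s i\<bar> < e" "r < t0"
      unfolding A_def B_def using W1(4) by auto
    hence "ereal t0 < ereal r" using nb(5) by (meson less_trans)
    thus False using \<open>r < t0\<close> by simp
  qed
  obtain L :: "'a \<times> ('a \<Rightarrow> real) \<times> real \<Rightarrow> real" where L: "linear L" "L (a0 - b0) \<ge> 1" "\<And>a b. a \<in> A \<Longrightarrow> b \<in> B \<Longrightarrow> L b \<le> L a"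
    using separation[OF cA a0A cB b0B absB disj] by blast
  define f where "f x = L (x, 0, 0)" for x
  define g where "g xs = L (0, xs, 0)" for xs
  define q where "q = L (0, 0, 1)"
  have Ldec: "L (x, xs, r) = f x + g xs + q * r" for x xs r
    unfolding f_def g_def q_def using test_L[OF L(1), of x xs r] by (simp add: mult.commute)
  have fl: "linear f" unfolding f_def by (rule lin_embed1[OF L(1)])
  have gl: "linear g" unfolding g_def by (rule lin_embed2[OF L(1)])
  obtain s where s: "s > 0" "b0 + s *\<^sub>R (a0 - b0) \<in> B" using absB by blast
  have Lb0: "L b0 = f x0 + g x0s + q * \<beta>" unfolding b0_def by (rule Ldec)
  have key: "L b0 + s \<le> L a" if "a \<in> A" for a
  proof -
    have "L (b0 + s *\<^sub>R (a0 - b0)) = L b0 + s * L (a0 - b0)"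
      using L(1) by (simp add: linear_add linear_scale)
    moreover have "s * 1 \<le> s * L (a0 - b0)" using L(2) s(1) by (intro mult_left_mono) auto
    moreover have "L (b0 + s *\<^sub>R (a0 - b0)) \<le> L a" using L(3)[OF that s(2)] .
    ultimately show ?thesis by linarith
  qed
  have inB: "(x, x0s + c *\<^sub>R ds, r) \<in> B" if "x \<in> W1" "r < t0" "\<forall>i\<in>E. ds i = 0" for x c ds r
    unfolding B_def using that nb(4) by simp
  have Bb: "f x + g x0s + c * g ds + q * r \<le> L a0" if "x \<in> W1" "r < t0" "\<forall>i\<in>E. ds i = 0" for x c ds r
  proof -
    have "L (x, x0s + c *\<^sub>R ds, r) \<le> L a0" using L(3)[OF a0A inB[OF that]] .
    thus ?thesis using gl by (simp add: Ldec linear_add linear_scale)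
  qed
  have q0: "q \<ge> 0"
  proof (rule ccontr)
    assume "\<not> q \<ge> 0"
    hence qn: "q < 0" by simp
    define k where "k = (\<bar>L a0 - L b0\<bar> + 1) / (- q)"
    have "q * k = - (\<bar>L a0 - L b0\<bar> + 1)" unfolding k_def using qn by (simp add: field_simps)
    moreover have "f x0 + g x0s + 0 * g 0 + q * (\<beta> - k) \<le> L a0"
    proof (rule Bb[OF W1(3)])
      have "0 \<le> k" unfolding k_def using qn by (intro divide_nonneg_pos) auto
      thus "\<beta> - k < t0" using bt by linarith
    qed simp
    ultimately show False using Lb0 by (simp add: algebra_simps)
  qed
  have fd: "f \<in> dual \<tau>"
  proof (rule lcs_bounded_dual[OF l fl W1(1) W1(3)])
    fix x assume "x \<in> W1"
    from Bb[OF this bt, of 0 0] show "f x \<le> L a0 - g x0s - q * \<beta>" by simp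
  qed
  have gvan: "g ds = 0" if "\<forall>i\<in>E. ds i = 0" for ds
  proof (rule ccontr)
    assume gn: "g ds \<noteq> 0"
    define c where "c = (\<bar>L a0 - L b0\<bar> + 1) / g ds"
    have "c * g ds = \<bar>L a0 - L b0\<bar> + 1" unfolding c_def using gn by simp
    moreover have "f x0 + g x0s + c * g ds + q * \<beta> \<le> L a0" using Bb[OF W1(3) bt that] .
    ultimately show False using Lb0 by linarith
  qed
  define a where "a = (\<Sum>i\<in>E. g (\<lambda>j. if j = i then 1 else 0) *\<^sub>R i)"
  have ga: "g xs = xs a" if "xs \<in> dual \<tau>" for xs
  proof -
    have lx: "linear xs" using that dual_lin by blast
    have "g xs = (\<Sum>i\<in>E. xs i * g (\<lambda>j. if j = i then 1 else 0))"
      by (rule finite_dep[OF gl nb(3) gvan])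
    also have "\<dots> = xs a" unfolding a_def using lx by (simp add: linear_sum linear_scale mult.commute)
    finally show ?thesis .
  qed
  have star: "f x0 + x0s a + q * \<beta> + s / 2 \<le> f u + us a + q * us u" if p: "(u, us) \<in> R" for u us
  proof -
    define \<theta> where "\<theta> = s / (2 * (q + 1))"
    have th0: "\<theta> > 0" unfolding \<theta>_def using s(1) q0 by (intro divide_pos_pos) auto
    have qth: "q * \<theta> \<le> s / 2"
    proof -
      have "q * \<theta> = (s / 2) * (q / (q + 1))" unfolding \<theta>_def using q0 by (simp add: field_simps)
      also have "\<dots> \<le> (s / 2) * 1" using s(1) q0 by (intro mult_left_mono) auto
      finally show ?thesis by simp
    qed
    have usd: "us \<in> dual \<tau>" using Rd[OF p] .
    have "ereal (us u) < ereal (us u + \<theta>)" using th0 by simp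
    hence "h (u, us) < ereal (us u + \<theta>)" using hR[OF p] by (rule le_less_trans[rotated])
    hence "(u, us, us u + \<theta>) \<in> A" unfolding A_def using usd by simp
    from key[OF this] have "L b0 + s \<le> f u + g us + q * (us u + \<theta>)" by (simp add: Ldec)
    thus ?thesis using Lb0 ga[OF usd] ga[OF x0s] qth by (simp add: algebra_simps)
  qed
  show False
  proof (cases "q = 0")
    case False
    hence qp: "q > 0" using q0 by simp
    define y where "y = (- (1 / q)) *\<^sub>R a"
    define ys where "ys = (\<lambda>v. (- (1 / q)) * f v + 0 * f v)"
    have ysd: "ys \<in> dual \<tau>" unfolding ys_def by (rule dual_comb[OF fd fd])
    have "fitz R (y, ys) \<le> ereal (- (1 / q) * (f x0 + x0s a + q * \<beta> + s / 2))"
    proof (rule fitz_le)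
      fix u us assume p: "(u, us) \<in> R"
      have lu: "linear us" using Rd[OF p] dual_lin by blast
      have uy: "us y = - (1 / q) * us a" unfolding y_def using linear_scale[OF lu, of "- (1 / q)" a] by simp
      have "us y + ys u - us u = - (1 / q) * (f u + us a + q * us u)"
        unfolding uy ys_def using qp by (simp add: field_simps)
      also have "\<dots> \<le> - (1 / q) * (f x0 + x0s a + q * \<beta> + s / 2)"
        using star[OF p] qp by (intro mult_left_mono_neg) auto
      finally show "us y + ys u - us u \<le> - (1 / q) * (f x0 + x0s a + q * \<beta> + s / 2)" .
    qed
    with hyp[OF ysd] have "x0s y + ys x0 - \<beta> \<le> - (1 / q) * (f x0 + x0s a + q * \<beta> + s / 2)"
      by (meson ereal_less_eq(3) order_trans)
    moreover have "x0s y + ys x0 - \<beta> = - (1 / q) * (x0s a + f x0) - \<beta>"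
    proof -
      have "x0s y = - (1 / q) * x0s a" unfolding y_def using linear_scale[OF dual_lin[OF x0s], of "- (1 / q)" a] by simp
      thus ?thesis unfolding ys_def by (simp add: algebra_simps)
    qed
    ultimately have "- (1 / q) * (x0s a + f x0) - \<beta> \<le> - (1 / q) * (f x0 + x0s a + q * \<beta> + s / 2)"
      by simp
    hence "q * (- (1 / q) * (x0s a + f x0) - \<beta>) \<le> q * (- (1 / q) * (f x0 + x0s a + q * \<beta> + s / 2))"
      using qp by (intro mult_left_mono) auto
    hence "- (x0s a + f x0) - q * \<beta> \<le> - (f x0 + x0s a + q * \<beta> + s / 2)"
      using qp by (simp add: algebra_simps)
    thus False using s(1) by simp
  next
    case True
    obtain b bs where bR: "(b, bs) \<in> R" using Rne by auto
    have bsd: "bs \<in> dual \<tau>" using Rd[OF bR] .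
    define C where "C = x0s b + bs x0 - \<beta> - bs b"
    define s' where "s' = 2 * (\<bar>C\<bar> + 1) / s"
    have s'0: "s' \<ge> 0" unfolding s'_def using s(1) by simp
    have s's: "s' * (s / 2) = \<bar>C\<bar> + 1" unfolding s'_def using s(1) by simp
    define y where "y = b - s' *\<^sub>R a"
    define ys where "ys = (\<lambda>v. 1 * bs v + (- s') * f v)"
    have ysd: "ys \<in> dual \<tau>" unfolding ys_def by (rule dual_comb[OF bsd fd])
    have "fitz R (y, ys) \<le> ereal (bs b - s' * (f x0 + x0s a + s / 2))"
    proof (rule fitz_le)
      fix u us assume p: "(u, us) \<in> R"
      have lu: "linear us" using Rd[OF p] dual_lin by blast
      have mt: "us b + bs u - us u \<le> bs b" using mono_term[OF Rm bR p lu dual_lin[OF bsd]] .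
      have st: "f x0 + x0s a + s / 2 \<le> f u + us a" using star[OF p] True by simp
      have "us y + ys u - us u = (us b + bs u - us u) - s' * (us a + f u)"
        unfolding y_def ys_def using lu by (simp add: linear_diff linear_scale algebra_simps)
      also have "\<dots> \<le> bs b - s' * (f x0 + x0s a + s / 2)"
        using mt mult_left_mono[OF st s'0] by (simp add: algebra_simps)
      finally show "us y + ys u - us u \<le> bs b - s' * (f x0 + x0s a + s / 2)" .
    qed
    with hyp[OF ysd] have "x0s y + ys x0 - \<beta> \<le> bs b - s' * (f x0 + x0s a + s / 2)"
      by (meson ereal_less_eq(3) order_trans)
    moreover have "x0s y + ys x0 - \<beta> = x0s b - s' * x0s a + bs x0 - s' * f x0 - \<beta>"
      unfolding y_def ys_def using dual_lin[OF x0s] by (simp add: linear_diff linear_scale)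
    ultimately have "C \<le> - (s' * (s / 2))" unfolding C_def by (simp add: algebra_simps)
    thus False using s's by linarith
  qed
qed



lemma pair_dec:
  fixes L :: "'b::real_vector \<times> real \<Rightarrow> real"
  assumes "linear L"
  shows "L (d, r) = L (d, 0) + L (0, 1) * r"
proof -
  have "(d, r) = (d, 0) + r *\<^sub>R (0, 1)" by simp
  hence "L (d, r) = L ((d, 0) + r *\<^sub>R (0, 1))" by metis
  also have "\<dots> = L (d, 0) + r *\<^sub>R L (0, 1)"
    by (simp only: linear_add[OF assms] linear_scale[OF assms])
  finally show ?thesis by simp
qed

lemma lin_embedp:
  fixes L :: "'b::real_vector \<times> real \<Rightarrow> real"
  assumes "linear L" shows "linear (\<lambda>x. L (x, 0))"
proof (rule linearI)
  fix x y :: 'b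
  have "L (x + y, 0) = L ((x, 0) + (y, 0))" by simp
  thus "L (x + y, 0) = L (x, 0) + L (y, 0)" by (simp only: linear_add[OF assms])
next
  fix c :: real and x :: 'b
  have "L (c *\<^sub>R x, 0) = L (c *\<^sub>R (x, 0))" by simp
  thus "L (c *\<^sub>R x, 0) = c *\<^sub>R L (x, 0)" by (simp only: linear_scale[OF assms])
qed

context setting
begin

lemma sandwich:
  assumes x0: "x0 \<in> clV" and x0s: "x0s \<in> dual \<tau>" and rel: "fitz R (x0, x0s) \<le> ereal (x0s x0)"
  shows "\<exists>n \<in> dual \<tau>. (\<forall>y\<in>V. n y \<le> n x0) \<and>
     (\<forall>y ys. ys \<in> dual \<tau> \<longrightarrow> ereal (x0s y - x0s x0 + ys x0 - (n y - n x0)) \<le> fitz R (y, ys))"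
proof -
  have lx0: "linear x0s" using dual_lin[OF x0s] .
  obtain a1 a1s where a1R: "(a1, a1s) \<in> R" using R_ne by auto
  have a1V: "a1 \<in> V" using R_V[OF a1R] .
  define A where "A = {(d, r). \<exists>ys\<in>dual \<tau>. fitz R (x0 + d, ys) < ereal (r + ys x0 + x0s d)}"
  define B where "B = {(d, r). x0 + d \<in> V \<and> r < (0::real)}"
  define b0 where "b0 = (a1 - x0, - 1 :: real)"
  define a0 where "a0 = (0 :: 'a, 1 :: real)"
  have Ar: "(0, r) \<in> A" if "r > 0" for r
  proof -
    have z: "x0s 0 = 0" using linear_0[OF lx0] .
    have "ereal (x0s x0) < ereal (r + x0s x0 + x0s 0)" using that z by simp
    from le_less_trans[OF rel this] have "fitz R (x0 + 0, x0s) < ereal (r + x0s x0 + x0s 0)" by simp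
    thus ?thesis unfolding A_def using x0s by blast
  qed
  have a0A: "a0 \<in> A" unfolding a0_def by (rule Ar) simp
  have b0B: "b0 \<in> B" unfolding b0_def B_def using a1V by simp
  have cA: "convex A"
  proof (rule convexI)
    fix p1 p2 :: "'a \<times> real" and u v :: real
    assume p1: "p1 \<in> A" and p2: "p2 \<in> A" and uv: "0 \<le> u" "0 \<le> v" "u + v = 1"
    obtain d1 r1 where e1: "p1 = (d1, r1)" by (cases p1) auto
    obtain d2 r2 where e2: "p2 = (d2, r2)" by (cases p2) auto
    obtain ys1 where y1: "ys1 \<in> dual \<tau>" "fitz R (x0 + d1, ys1) < ereal (r1 + ys1 x0 + x0s d1)"
      using p1 e1 A_def by auto
    obtain ys2 where y2: "ys2 \<in> dual \<tau>" "fitz R (x0 + d2, ys2) < ereal (r2 + ys2 x0 + x0s d2)"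
      using p2 e2 A_def by auto
    obtain c1 where c1: "fitz R (x0 + d1, ys1) < ereal c1" "ereal c1 < ereal (r1 + ys1 x0 + x0s d1)"
      using ereal_dense2[OF y1(2)] by blast
    obtain c2 where c2: "fitz R (x0 + d2, ys2) < ereal c2" "ereal c2 < ereal (r2 + ys2 x0 + x0s d2)"
      using ereal_dense2[OF y2(2)] by blast
    have v: "v = 1 - u" using uv by simp
    define ys where "ys = (\<lambda>w. u * ys1 w + (1 - u) * ys2 w)"
    have ysd: "ys \<in> dual \<tau>" unfolding ys_def by (rule dual_comb[OF y1(1) y2(1)])
    have "fitz R (u *\<^sub>R (x0 + d1) + (1 - u) *\<^sub>R (x0 + d2), ys) \<le> ereal (u * c1 + (1 - u) * c2)"
      unfolding ys_def using fitz_conv'[OF less_imp_le[OF c1(1)] less_imp_le[OF c2(1)], of u] uv v by simp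
    moreover have "u *\<^sub>R (x0 + d1) + (1 - u) *\<^sub>R (x0 + d2) = x0 + (u *\<^sub>R d1 + v *\<^sub>R d2)"
      unfolding v by (simp add: algebra_simps)
    moreover have "u * c1 + (1 - u) * c2 < (u * r1 + v * r2) + ys x0 + x0s (u *\<^sub>R d1 + v *\<^sub>R d2)"
    proof -
      have cc: "c1 < r1 + ys1 x0 + x0s d1" "c2 < r2 + ys2 x0 + x0s d2" using c1(2) c2(2) by auto
      have "u * c1 + (1 - u) * c2 < u * (r1 + ys1 x0 + x0s d1) + (1 - u) * (r2 + ys2 x0 + x0s d2)"
      proof (cases "u = 0")
        case True thus ?thesis using cc by simp
      next
        case False
        hence "u * c1 < u * (r1 + ys1 x0 + x0s d1)" using uv cc by (intro mult_strict_left_mono) auto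
        moreover have "(1 - u) * c2 \<le> (1 - u) * (r2 + ys2 x0 + x0s d2)" using uv v cc by (intro mult_left_mono) auto
        ultimately show ?thesis by linarith
      qed
      also have "\<dots> = (u * r1 + v * r2) + ys x0 + x0s (u *\<^sub>R d1 + v *\<^sub>R d2)"
      proof -
        have "x0s (u *\<^sub>R d1 + v *\<^sub>R d2) = u * x0s d1 + v * x0s d2"
          using lx0 by (simp add: linear_add linear_scale)
        thus ?thesis unfolding ys_def v by (simp add: algebra_simps)
      qed
      finally show ?thesis .
    qed
    ultimately have "fitz R (x0 + (u *\<^sub>R d1 + v *\<^sub>R d2), ys) \<le> ereal (u * c1 + (1 - u) * c2)"
      "ereal (u * c1 + (1 - u) * c2) < ereal ((u * r1 + v * r2) + ys x0 + x0s (u *\<^sub>R d1 + v *\<^sub>R d2))"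
      by simp_all
    hence "fitz R (x0 + (u *\<^sub>R d1 + v *\<^sub>R d2), ys) < ereal ((u * r1 + v * r2) + ys x0 + x0s (u *\<^sub>R d1 + v *\<^sub>R d2))"
      by (rule le_less_trans)
    thus "u *\<^sub>R p1 + v *\<^sub>R p2 \<in> A" unfolding e1 e2 A_def using ysd by auto
  qed
  have cB: "convex B"
  proof (rule convexI)
    fix p1 p2 :: "'a \<times> real" and u v :: real
    assume p1: "p1 \<in> B" and p2: "p2 \<in> B" and uv: "0 \<le> u" "0 \<le> v" "u + v = 1"
    obtain d1 r1 where e1: "p1 = (d1, r1)" by (cases p1) auto
    obtain d2 r2 where e2: "p2 = (d2, r2)" by (cases p2) auto
    have d1: "x0 + d1 \<in> V" "r1 < 0" using p1 e1 B_def by auto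
    have d2: "x0 + d2 \<in> V" "r2 < 0" using p2 e2 B_def by auto
    have "u *\<^sub>R (x0 + d1) + v *\<^sub>R (x0 + d2) \<in> V" using convexD[OF cV d1(1) d2(1) uv] .
    moreover have "u *\<^sub>R (x0 + d1) + v *\<^sub>R (x0 + d2) = x0 + (u *\<^sub>R d1 + v *\<^sub>R d2)"
    proof -
      have "u *\<^sub>R x0 + v *\<^sub>R x0 = x0" using uv by (simp flip: scaleR_add_left)
      thus ?thesis by (simp add: algebra_simps)
    qed
    moreover have "u * r1 + v * r2 < 0"
    proof -
      have "u * r1 + v * r2 \<le> u * max r1 r2 + v * max r1 r2" using uv by (intro add_mono mult_left_mono) auto
      also have "\<dots> = max r1 r2" using uv by (simp flip: distrib_right)
      finally show ?thesis using d1(2) d2(2) by linarith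
    qed
    ultimately show "u *\<^sub>R p1 + v *\<^sub>R p2 \<in> B" unfolding e1 e2 B_def by simp
  qed
  have absB: "\<exists>s>0. b0 + s *\<^sub>R v \<in> B" for v
  proof -
    obtain v1 v2 where ev: "v = (v1, v2)" by (cases v) auto
    obtain s1 where s1: "s1 > 0" "a1 + s1 *\<^sub>R v1 \<in> V" using lcs_ray[OF l oV a1V] by blast
    define s where "s = min s1 (1 / (\<bar>v2\<bar> + 1))"
    have s0: "0 < s" unfolding s_def using s1 by (simp add: add_pos_nonneg)
    have "a1 + s *\<^sub>R v1 \<in> V" using convex_ray[OF cV a1V s1(2) s1(1)] s0 by (simp add: s_def)
    moreover have "s * v2 < 1"
    proof -
      have "s * v2 \<le> s * \<bar>v2\<bar>" using s0 by (simp add: mult_left_mono)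
      also have "\<dots> \<le> (1 / (\<bar>v2\<bar> + 1)) * \<bar>v2\<bar>" using s0 by (intro mult_right_mono) (auto simp: s_def)
      also have "\<dots> < 1" by (simp add: field_simps)
      finally show ?thesis .
    qed
    ultimately have "b0 + s *\<^sub>R v \<in> B" unfolding b0_def ev B_def by simp
    thus ?thesis using s0 by blast
  qed
  have disj: "A \<inter> B = {}"
  proof (rule ccontr)
    assume "A \<inter> B \<noteq> {}"
    then obtain d r where p: "(d, r) \<in> A" "(d, r) \<in> B" by auto
    then obtain ys where ys: "ys \<in> dual \<tau>" "fitz R (x0 + d, ys) < ereal (r + ys x0 + x0s d)"
      unfolding A_def by auto
    have dV: "x0 + d \<in> V" "r < 0" using p(2) B_def by auto
    have "ereal (x0s (x0 + d) - x0s x0 + ys x0) \<le> fitz R (x0 + d, ys)"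
      by (rule part2[OF x0 x0s rel dV(1) ys(1)])
    moreover have "x0s (x0 + d) - x0s x0 + ys x0 = ys x0 + x0s d" using lx0 by (simp add: linear_add)
    ultimately have "ereal (ys x0 + x0s d) \<le> fitz R (x0 + d, ys)" by simp
    from le_less_trans[OF this ys(2)] have "ereal (ys x0 + x0s d) < ereal (r + ys x0 + x0s d)" .
    thus False using dV(2) by simp
  qed
  obtain L :: "'a \<times> real \<Rightarrow> real" where L: "linear L" "L (a0 - b0) \<ge> 1"
    "\<And>a b. a \<in> A \<Longrightarrow> b \<in> B \<Longrightarrow> L b \<le> L a"
    using separation[OF cA a0A cB b0B absB disj] by blast
  define ell where "ell x = L (x, 0)" for x
  define q where "q = L (0, 1)"
  have Ldec: "L (d, r) = ell d + q * r" for d r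
    unfolding ell_def q_def using pair_dec[OF L(1), of d r] by (simp add: mult.commute)
  have ll: "linear ell" unfolding ell_def by (rule lin_embedp[OF L(1)])
  have inB: "(d, r) \<in> B" if "x0 + d \<in> V" "r < 0" for d r unfolding B_def using that by simp
  have Bq: "ell d + q * r \<le> q * r'" if "x0 + d \<in> V" "r < 0" "r' > 0" for d r r'
    using L(3)[OF Ar[OF that(3)] inB[OF that(1,2)]] linear_0[OF ll] by (simp add: Ldec)
  have q0: "q \<ge> 0"
  proof (rule ccontr)
    assume "\<not> q \<ge> 0"
    hence qn: "q < 0" by simp
    define r where "r = (\<bar>ell (a1 - x0) - q\<bar> + 1) / (- q)"
    have r0: "r > 0" unfolding r_def using qn by (intro divide_pos_pos) (auto simp: add_pos_nonneg)
    have "q * r = - (\<bar>ell (a1 - x0) - q\<bar> + 1)" unfolding r_def using qn by (simp add: field_simps)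
    moreover have "ell (a1 - x0) + q * (- 1) \<le> q * r" using Bq[of "a1 - x0" "-1" r] a1V r0 by simp
    ultimately show False by linarith
  qed
  have ellV: "ell d \<le> 0" if "x0 + d \<in> V" for d
  proof (rule ccontr)
    assume "\<not> ell d \<le> 0"
    hence lp: "ell d > 0" by simp
    define \<eta> where "\<eta> = ell d / (4 * (q + 1))"
    have e0: "\<eta> > 0" unfolding \<eta>_def using lp q0 by (intro divide_pos_pos) auto
    have "ell d + q * (- \<eta>) \<le> q * \<eta>" using Bq[OF that _ e0, of "- \<eta>"] e0 by simp
    hence "ell d \<le> 2 * (q * \<eta>)" by (simp add: mult.commute)
    moreover have "2 * (q * \<eta>) < ell d"
    proof -
      have "2 * (q * \<eta>) = ell d * (q / (2 * (q + 1)))" unfolding \<eta>_def using q0 by (simp add: field_simps)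
      also have "\<dots> < ell d * 1"
      proof (rule mult_strict_left_mono[OF _ lp])
        have "q < 2 * (q + 1)" using q0 by simp
        thus "q / (2 * (q + 1)) < 1" using q0 by (simp add: divide_less_eq)
      qed
      finally show ?thesis by simp
    qed
    ultimately show False by simp
  qed
  have elld: "ell \<in> dual \<tau>"
  proof (rule lcs_bounded_dual[OF l ll])
    show "openin \<tau> {d. 1 *\<^sub>R d + x0 \<in> V}" by (rule lcs_affine_open[OF l oV])
    show "a1 - x0 \<in> {d. 1 *\<^sub>R d + x0 \<in> V}" using a1V by simp
    fix d assume "d \<in> {d. 1 *\<^sub>R d + x0 \<in> V}"
    thus "ell d \<le> 0" using ellV by (simp add: add.commute)
  qed
  have Apos: "0 \<le> L a" if aA: "a \<in> A" for a
  proof (rule ccontr)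
    assume "\<not> 0 \<le> L a"
    hence neg: "L a < 0" by simp
    define \<epsilon> where "\<epsilon> = - L a"
    have ep: "\<epsilon> > 0" using neg \<epsilon>_def by simp
    have cont: "continuous_map \<tau> euclideanreal ell" using elld unfolding dual_def by simp
    have "openin \<tau> {y \<in> topspace \<tau>. ell y \<in> ball (ell x0) (\<epsilon> / 2)}"
      by (rule openin_continuous_map_preimage[OF cont]) (simp add: open_ball)
    hence oO: "openin \<tau> {y. ell y \<in> ball (ell x0) (\<epsilon> / 2)}" using lcs_top[OF l] by simp
    have xin: "x0 \<in> {y. ell y \<in> ball (ell x0) (\<epsilon> / 2)}" using ep by simp
    have cl: "\<forall>T. x0 \<in> T \<and> openin \<tau> T \<longrightarrow> (\<exists>y. y \<in> V \<and> y \<in> T)"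
      using x0 unfolding in_closure_of by simp
    obtain y where y: "y \<in> V" "y \<in> {y. ell y \<in> ball (ell x0) (\<epsilon> / 2)}"
      using cl[rule_format, OF conjI[OF xin oO]] by blast
    have "dist (ell x0) (ell y) < \<epsilon> / 2" using y(2) by simp
    hence "\<bar>ell x0 - ell y\<bar> < \<epsilon> / 2" by (simp add: dist_real_def)
    moreover have "ell (y - x0) = ell y - ell x0" by (rule linear_diff[OF ll])
    ultimately have yl: "ell (y - x0) > - (\<epsilon> / 2)" by linarith
    define r where "r = - (\<epsilon> / (4 * (q + 1)))"
    have "0 < \<epsilon> / (4 * (q + 1))" using ep q0 by (intro divide_pos_pos) auto
    hence r0: "r < 0" unfolding r_def by simp
    have qr: "q * r \<ge> - (\<epsilon> / 4)"
    proof -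
      have "q * (\<epsilon> / (4 * (q + 1))) = (\<epsilon> / 4) * (q / (q + 1))" using q0 by (simp add: field_simps)
      also have "\<dots> \<le> (\<epsilon> / 4) * 1" using ep q0 by (intro mult_left_mono) auto
      finally show ?thesis unfolding r_def by simp
    qed
    have "x0 + (y - x0) \<in> V" using y(1) by simp
    from L(3)[OF aA inB[OF this r0]] have "L (y - x0, r) \<le> L a" .
    hence "ell (y - x0) + q * r \<le> - \<epsilon>" using \<epsilon>_def by (simp add: Ldec)
    thus False using yl qr ep by linarith
  qed
  have qpos: "q > 0"
  proof (rule ccontr)
    assume "\<not> q > 0"
    hence q00: "q = 0" using q0 by simp
    have "a0 - b0 = (x0 - a1, 2)" unfolding a0_def b0_def by simp
    hence v1: "ell (x0 - a1) \<ge> 1" using L(2) q00 by (simp add: Ldec)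
    define r where "r = a1s a1 - a1s x0 - x0s (a1 - x0) + 1"
    have "ereal (a1s a1) < ereal (r + a1s x0 + x0s (a1 - x0))" unfolding r_def by simp
    from le_less_trans[OF R_self[OF a1R] this]
    have "fitz R (x0 + (a1 - x0), a1s) < ereal (r + a1s x0 + x0s (a1 - x0))" by simp
    hence "(a1 - x0, r) \<in> A" unfolding A_def using R_dual[OF a1R] by blast
    from Apos[OF this] have "ell (a1 - x0) \<ge> 0" using q00 by (simp add: Ldec)
    moreover have "ell (a1 - x0) \<le> 0" using ellV a1V by simp
    ultimately have z: "ell (a1 - x0) = 0" by simp
    obtain s where s: "s > 0" "a1 + s *\<^sub>R (x0 - a1) \<in> V" using lcs_ray[OF l oV a1V] by blast
    have "ell (a1 + s *\<^sub>R (x0 - a1) - x0) \<le> 0" using ellV[of "a1 + s *\<^sub>R (x0 - a1) - x0"] s(2) by simp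
    moreover have "ell (a1 + s *\<^sub>R (x0 - a1) - x0) = ell (a1 - x0) + s * ell (x0 - a1)"
    proof -
      have eq: "a1 + s *\<^sub>R (x0 - a1) - x0 = (a1 - x0) + s *\<^sub>R (x0 - a1)" by simp
      show ?thesis by (simp only: eq linear_add[OF ll] linear_scale[OF ll] real_scaleR_def)
    qed
    moreover have "s * ell (x0 - a1) \<ge> s * 1" using v1 s(1) by (intro mult_left_mono) auto
    ultimately show False using z s(1) by linarith
  qed
  define n where "n = (\<lambda>y. (1 / q) * ell y + 0 * ell y)"
  have nd: "n \<in> dual \<tau>" unfolding n_def by (rule dual_comb[OF elld elld])
  have ndiff: "n y - n x0 = ell (y - x0) / q" for y
    unfolding n_def using ll by (simp add: linear_diff diff_divide_distrib)
  have nV: "\<forall>y\<in>V. n y \<le> n x0"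
  proof
    fix y assume "y \<in> V"
    hence "ell (y - x0) \<le> 0" using ellV[of "y - x0"] by simp
    hence "ell (y - x0) / q \<le> 0" using qpos by (simp add: divide_nonpos_pos)
    thus "n y \<le> n x0" using ndiff[of y] by simp
  qed
  have main: "ereal (x0s y - x0s x0 + ys x0 - (n y - n x0)) \<le> fitz R (y, ys)" if ys: "ys \<in> dual \<tau>" for y ys
  proof (rule ccontr)
    define Rr where "Rr = x0s y - x0s x0 + ys x0 - (n y - n x0)"
    assume "\<not> ereal (x0s y - x0s x0 + ys x0 - (n y - n x0)) \<le> fitz R (y, ys)"
    hence "fitz R (y, ys) < ereal Rr" unfolding Rr_def by simp
    then obtain p where p: "fitz R (y, ys) < ereal p" "ereal p < ereal Rr" using ereal_dense2 by blast
    define d where "d = y - x0"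
    define r where "r = p - ys x0 - x0s d"
    have "fitz R (x0 + d, ys) < ereal (r + ys x0 + x0s d)" unfolding d_def r_def using p(1) by simp
    hence "(d, r) \<in> A" unfolding A_def using ys by blast
    from Apos[OF this] have "0 \<le> ell d + q * r" by (simp add: Ldec)
    hence "- (ell d) / q \<le> r" using qpos by (simp add: field_simps)
    moreover have "Rr = x0s d + ys x0 - ell d / q"
      unfolding Rr_def d_def using ndiff[of y] lx0 by (simp add: linear_diff)
    ultimately have "Rr \<le> p" unfolding r_def by (simp add: field_simps)
    thus False using p(2) by simp
  qed
  show ?thesis using nd nV main by (intro bexI[of _ n] conjI allI impI) auto
qed

end



lemma restr_mono: "V \<subseteq> S \<Longrightarrow> restr T V \<subseteq> restr T S"
  unfolding restr_def by auto

lemma normal_in: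
  assumes l: "lcs \<tau>" and n: "n \<in> dual \<tau>" and x0: "x0 \<in> \<tau> closure_of V" and nV: "\<forall>y\<in>V. n y \<le> n x0"
  shows "(x0, n) \<in> normal_cone \<tau> (\<tau> closure_of V)"
proof -
  have cont: "continuous_map \<tau> euclideanreal n" using n unfolding dual_def by simp
  have "closedin \<tau> {y \<in> topspace \<tau>. n y \<in> {..n x0}}"
    by (rule closedin_continuous_map_preimage[OF cont]) simp
  hence cl: "closedin \<tau> {y. n y \<le> n x0}" using lcs_top[OF l] by simp
  have "\<tau> closure_of V \<subseteq> {y. n y \<le> n x0}" by (rule closure_of_minimal[OF _ cl]) (use nV in auto)
  hence "\<forall>y\<in>\<tau> closure_of V. n (y - x0) \<le> 0" using dual_lin[OF n] by (auto simp: linear_diff)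
  thus ?thesis unfolding normal_cone_def using x0 n by simp
qed

context setting
begin

lemma V_sub: "V \<subseteq> clV"
  by (rule closure_of_subset) (simp add: lcs_top[OF l])

lemma main_incl:
  assumes rep: "representable \<tau> clV T"
  shows "le_c \<tau> (fitz R) \<inter> (clV \<times> dual \<tau>) \<subseteq> op_sum T (normal_cone \<tau> clV)"
proof
  fix z assume z: "z \<in> le_c \<tau> (fitz R) \<inter> (clV \<times> dual \<tau>)"
  obtain x0 x0s where zz: "z = (x0, x0s)" by (cases z) auto
  have x0: "x0 \<in> clV" and x0s: "x0s \<in> dual \<tau>" and rel: "fitz R (x0, x0s) \<le> ereal (x0s x0)"
    using z unfolding zz le_c_def cpl_def by auto
  obtain h where h: "proper_on \<tau> h" "convex_on_Z \<tau> h" "lsc_on_Z \<tau> h"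
    "\<forall>z \<in> UNIV \<times> dual \<tau>. ereal (cpl z) \<le> h z"
    "{z \<in> clV \<times> dual \<tau>. h z = ereal (cpl z)} = restr T clV"
    using rep unfolding representable_def by blast
  obtain n where n: "n \<in> dual \<tau>" "\<forall>y\<in>V. n y \<le> n x0"
    "\<forall>y ys. ys \<in> dual \<tau> \<longrightarrow> ereal (x0s y - x0s x0 + ys x0 - (n y - n x0)) \<le> fitz R (y, ys)"
    using sandwich[OF x0 x0s rel] by blast
  define w where "w = (\<lambda>y. 1 * x0s y + (- 1) * n y)"
  have wd: "w \<in> dual \<tau>" unfolding w_def by (rule dual_comb[OF x0s n(1)])
  have hR: "h (u, us) \<le> ereal (us u)" if p: "(u, us) \<in> R" for u us
  proof -
    have "(u, us) \<in> restr T clV" using p V_sub unfolding restr_def by auto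
    hence "(u, us) \<in> {z \<in> clV \<times> dual \<tau>. h z = ereal (cpl z)}" using h(5) by simp
    thus ?thesis by (simp add: cpl_def)
  qed
  have hyp: "ereal (w y + ys x0 - w x0) \<le> fitz R (y, ys)" if "ys \<in> dual \<tau>" for y ys
  proof -
    have eq: "w y + ys x0 - w x0 = x0s y - x0s x0 + ys x0 - (n y - n x0)" unfolding w_def by simp
    from n(3)[rule_format, of ys y, OF that] show ?thesis unfolding eq .
  qed
  have "h (x0, w) \<le> ereal (w x0)"
    by (rule lemmaL[OF l h(2) h(3) h(1) hR R_dual R_mono R_ne wd hyp])
  moreover have "ereal (w x0) \<le> h (x0, w)" using h(4) wd by (force simp: cpl_def)
  ultimately have "h (x0, w) = ereal (cpl (x0, w))" by (simp add: cpl_def)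
  hence "(x0, w) \<in> {z \<in> clV \<times> dual \<tau>. h z = ereal (cpl z)}" using x0 wd by simp
  hence wT: "(x0, w) \<in> T" using h(5) unfolding restr_def by blast
  have nN: "(x0, n) \<in> normal_cone \<tau> clV" by (rule normal_in[OF l n(1) x0 n(2)])
  have eq: "(\<lambda>y. w y + n y) = x0s" unfolding w_def by (simp add: fun_eq_iff)
  have "(x0, \<lambda>y. w y + n y) \<in> op_sum T (normal_cone \<tau> clV)"
    unfolding op_sum_def using wT nN by blast
  thus "z \<in> op_sum T (normal_cone \<tau> clV)" unfolding zz eq .
qed

lemma sum_dom: "op_sum T (normal_cone \<tau> clV) \<subseteq> dom_op T \<times> dual \<tau>"
proof
  fix z assume "z \<in> op_sum T (normal_cone \<tau> clV)"
  then obtain x u v where z: "z = (x, \<lambda>y. u y + v y)" "(x, u) \<in> T" "(x, v) \<in> normal_cone \<tau> clV"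
    unfolding op_sum_def by blast
  have ud: "u \<in> dual \<tau>" using z(2) op unfolding operator_def by auto
  have vd: "v \<in> dual \<tau>" using z(3) unfolding normal_cone_def by auto
  have "(\<lambda>y. 1 * u y + 1 * v y) \<in> dual \<tau>" by (rule dual_comb[OF ud vd])
  hence "(\<lambda>y. u y + v y) \<in> dual \<tau>" by simp
  moreover have "x \<in> dom_op T" using z(2) unfolding dom_op_def by force
  ultimately show "z \<in> dom_op T \<times> dual \<tau>" using z(1) by simp
qed

lemma R_sub_sum: "V \<subseteq> S \<Longrightarrow> S \<subseteq> clV \<Longrightarrow> R \<subseteq> restr (op_sum T (normal_cone \<tau> clV)) S"
proof
  fix p assume VS: "V \<subseteq> S" "S \<subseteq> clV" and p: "p \<in> R"
  obtain u us where pp: "p = (u, us)" by (cases p) auto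
  have uT: "(u, us) \<in> T" and uV: "u \<in> V" using p pp unfolding restr_def by auto
  have "(u, \<lambda>y. 0) \<in> normal_cone \<tau> clV"
    unfolding normal_cone_def using V_sub uV dual_zero by auto
  hence "(u, \<lambda>y. us y + 0) \<in> op_sum T (normal_cone \<tau> clV)"
    unfolding op_sum_def using uT
    by (intro CollectI exI[of _ u] exI[of _ us] exI[of _ "\<lambda>y. 0"] conjI) auto
  hence "(u, us) \<in> op_sum T (normal_cone \<tau> clV)" by simp
  thus "p \<in> restr (op_sum T (normal_cone \<tau> clV)) S" using pp uV VS unfolding restr_def by auto
qed

end

theorem proposition3p11:
  fixes \<tau> :: "'a::real_vector topology"
    and T :: "('a \<times> ('a \<Rightarrow> real)) set"
    and V :: "'a set"
  assumes "lcs \<tau>"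
    and "operator \<tau> T"
    and "openin \<tau> V" and "convex V"
    and "dom_op T \<inter> V \<noteq> {}"
    and "restr T V \<in> MX \<tau>"
  shows "(NI \<tau> V T \<longrightarrow>
            (\<forall>z \<in> (\<tau> closure_of V) \<times> dual \<tau>. ereal (cpl z) \<le> fitz (restr T V) z)
            \<and> (\<forall>S. V \<subseteq> S \<and> S \<subseteq> \<tau> closure_of V \<longrightarrow> NI \<tau> S T))
       \<and> (NI \<tau> V T \<and> representable \<tau> (\<tau> closure_of V) T \<longrightarrow>
            le_c \<tau> (fitz (restr T V)) \<inter> ((\<tau> closure_of V) \<times> dual \<tau>)
              \<subseteq> op_sum T (normal_cone \<tau> (\<tau> closure_of V))
            \<and> op_sum T (normal_cone \<tau> (\<tau> closure_of V)) \<subseteq> dom_op T \<times> dual \<tau>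
            \<and> (\<forall>S. V \<subseteq> S \<and> S \<subseteq> \<tau> closure_of V \<longrightarrow>
                  locates \<tau> S T \<and> identifies \<tau> S (op_sum T (normal_cone \<tau> (\<tau> closure_of V)))))"
proof (intro conjI impI)
  assume NI: "NI \<tau> V T"
  interpret setting \<tau> T V using assms NI by unfold_locales auto
  show "\<forall>z \<in> (\<tau> closure_of V) \<times> dual \<tau>. ereal (cpl z) \<le> fitz (restr T V) z"
    using part1 by (auto simp: cpl_def)
  show "\<forall>S. V \<subseteq> S \<and> S \<subseteq> \<tau> closure_of V \<longrightarrow> NI \<tau> S T"
  proof (intro allI impI)
    fix S assume S: "V \<subseteq> S \<and> S \<subseteq> \<tau> closure_of V"
    show "NI \<tau> S T" unfolding NI_def
    proof
      fix z assume "z \<in> S \<times> dual \<tau>"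
      then obtain x xs where z: "z = (x, xs)" "x \<in> clV" "xs \<in> dual \<tau>" using S by auto
      have "ereal (cpl z) \<le> fitz R z" using part1[OF z(2,3)] z(1) by (simp add: cpl_def)
      also have "\<dots> \<le> fitz (restr T S) z" by (rule fitz_mono[OF restr_mono]) (use S in auto)
      finally show "ereal (cpl z) \<le> fitz (restr T S) z" .
    qed
  qed
next
  assume a: "NI \<tau> V T \<and> representable \<tau> (\<tau> closure_of V) T"
  interpret setting \<tau> T V using assms a by unfold_locales auto
  have MI: "le_c \<tau> (fitz R) \<inter> (clV \<times> dual \<tau>) \<subseteq> op_sum T (normal_cone \<tau> clV)"
    using main_incl a by blast
  show "le_c \<tau> (fitz (restr T V)) \<inter> ((\<tau> closure_of V) \<times> dual \<tau>)
              \<subseteq> op_sum T (normal_cone \<tau> (\<tau> closure_of V))" using MI .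
  show SD: "op_sum T (normal_cone \<tau> (\<tau> closure_of V)) \<subseteq> dom_op T \<times> dual \<tau>" by (rule sum_dom)
  show "\<forall>S. V \<subseteq> S \<and> S \<subseteq> \<tau> closure_of V \<longrightarrow>
                  locates \<tau> S T \<and> identifies \<tau> S (op_sum T (normal_cone \<tau> (\<tau> closure_of V)))"
  proof (intro allI impI conjI)
    fix S assume S: "V \<subseteq> S \<and> S \<subseteq> \<tau> closure_of V"
    show "locates \<tau> S T" unfolding locates_def
    proof
      fix x assume x: "x \<in> fst ` le_c \<tau> (fitz (restr T S)) \<inter> S"
      then obtain xs where z: "(x, xs) \<in> le_c \<tau> (fitz (restr T S))" "x \<in> S" by force
      have xs: "xs \<in> dual \<tau>" "fitz (restr T S) (x, xs) \<le> ereal (cpl (x, xs))"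
        using z(1) unfolding le_c_def by auto
      have "fitz R (x, xs) \<le> fitz (restr T S) (x, xs)" by (rule fitz_mono[OF restr_mono]) (use S in auto)
      hence "(x, xs) \<in> le_c \<tau> (fitz R) \<inter> (clV \<times> dual \<tau>)"
        using xs z(2) S unfolding le_c_def by auto
      hence "(x, xs) \<in> dom_op T \<times> dual \<tau>" using MI SD by blast
      thus "x \<in> dom_op T" by simp
    qed
    show "identifies \<tau> S (op_sum T (normal_cone \<tau> (\<tau> closure_of V)))" unfolding identifies_def
    proof
      fix z assume z: "z \<in> le_c \<tau> (fitz (restr (op_sum T (normal_cone \<tau> (\<tau> closure_of V))) S)) \<inter> (S \<times> dual \<tau>)"
      have "fitz R z \<le> fitz (restr (op_sum T (normal_cone \<tau> clV)) S) z"
        by (rule fitz_mono[OF R_sub_sum]) (use S in auto)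
      hence "z \<in> le_c \<tau> (fitz R) \<inter> (clV \<times> dual \<tau>)"
        using z S unfolding le_c_def by auto
      thus "z \<in> op_sum T (normal_cone \<tau> (\<tau> closure_of V))" using MI by blast
    qed
  qed
qed


end
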